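(* For all positive integers $n,k$, the groups $\mathbb{Z}_{2n}\mathbin{\mathrm{wr}}\mathbb{Z}^k$ and $\mathbb{Z}_{3n}\mathbin{\mathrm{wr}}\mathbb{Z}^{2k+1}$ have the $R_\infty$-property.
   Context: $\mathbb{Z}_m\mathbin{\mathrm{wr}}\mathbb{Z}^k=\bigoplus_{x\in\mathbb{Z}^k}(\mathbb{Z}_m)_x\rtimes\mathbb{Z}^k$ is the restricted wreath product, with $\mathbb{Z}^k$ acting by shifting indices. For an automorphism $\varphi$ of a group $G$, elements $g_1,g_2$ are $\varphi$-twisted conjugate if $g_1=hg_2\varphi(h^{-1})$ for some $h\in G$; the number $R(\varphi)$ of these classes is the Reidemeister number. A group has the $R_\infty$-property if $R(\varphi)=\infty$ for every automorphism $\varphi$. *)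

theory Defs
  imports "HOL-Algebra.Group" "HOL-Algebra.Coset"
begin

text \<open>Restricted wreath product Z_m wr Z^k = (\<Oplus>_{x \<in> Z^k} Z_m) \<rtimes> Z^k.
  Points of Z^k are integer lists of length k.
  Z^k acts on the base by shifting indices: (v \<cdot> g)(x) = g(x - v).\<close>

definition vadd :: "int list \<Rightarrow> int list \<Rightarrow> int list" where
  "vadd v w = map2 (+) v w"

definition vsub :: "int list \<Rightarrow> int list \<Rightarrow> int list" where
  "vsub v w = map2 (-) v w"

definition wr_carrier :: "nat \<Rightarrow> nat \<Rightarrow> ((int list \<Rightarrow> int) \<times> int list) set" where
  "wr_carrier m k = {(f, v). length v = k
      \<and> (\<forall>x. 0 \<le> f x \<and> f x < int m)
      \<and> (\<forall>x. length x \<noteq> k \<longrightarrow> f x = 0)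
      \<and> finite {x. f x \<noteq> 0}}"

definition wr_mult :: "nat \<Rightarrow> nat \<Rightarrow> ((int list \<Rightarrow> int) \<times> int list) \<Rightarrow> ((int list \<Rightarrow> int) \<times> int list)
    \<Rightarrow> ((int list \<Rightarrow> int) \<times> int list)" where
  "wr_mult m k a b =
     ((\<lambda>x. if length x = k then (fst a x + fst b (vsub x (snd a))) mod int m else 0),
      vadd (snd a) (snd b))"

definition wreath :: "nat \<Rightarrow> nat \<Rightarrow> ((int list \<Rightarrow> int) \<times> int list) monoid" where
  "wreath m k = \<lparr>carrier = wr_carrier m k, mult = wr_mult m k,
                 one = (\<lambda>x. 0, replicate k 0)\<rparr>"

definition twisted_conj :: "('a, 'b) monoid_scheme \<Rightarrow> ('a \<Rightarrow> 'a) \<Rightarrow> 'a \<Rightarrow> 'a \<Rightarrow> bool" where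
  "twisted_conj G \<phi> g1 g2 \<longleftrightarrow>
     (\<exists>h \<in> carrier G. g1 = h \<otimes>\<^bsub>G\<^esub> g2 \<otimes>\<^bsub>G\<^esub> \<phi> (inv\<^bsub>G\<^esub> h))"

definition reidemeister_classes :: "('a, 'b) monoid_scheme \<Rightarrow> ('a \<Rightarrow> 'a) \<Rightarrow> 'a set set" where
  "reidemeister_classes G \<phi> =
     carrier G // {(g1, g2). g1 \<in> carrier G \<and> g2 \<in> carrier G \<and> twisted_conj G \<phi> g1 g2}"

definition R_infinity :: "('a, 'b) monoid_scheme \<Rightarrow> bool" where
  "R_infinity G \<longleftrightarrow> (\<forall>\<phi> \<in> iso G G. infinite (reidemeister_classes G \<phi>))"

end

theory Submission
  imports Defs "Jordan_Normal_Form.Char_Poly" "HOL-Library.List_Lexorder"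
begin

section \<open>Vectors as lists\<close>

definition vneg :: "int list \<Rightarrow> int list" where "vneg v = map uminus v"
definition smul :: "int \<Rightarrow> int list \<Rightarrow> int list" where "smul c v = map ((*) c) v"

lemma length_vadd[simp]: "length (vadd v w) = min (length v) (length w)"
  by (simp add: vadd_def)
lemma length_vsub[simp]: "length (vsub v w) = min (length v) (length w)"
  by (simp add: vsub_def)
lemma length_vneg[simp]: "length (vneg v) = length v" by (simp add: vneg_def)
lemma length_smul[simp]: "length (smul c v) = length v" by (simp add: smul_def)

lemma nth_vadd[simp]: "i < length v \<Longrightarrow> i < length w \<Longrightarrow> vadd v w ! i = v ! i + w ! i"
  by (simp add: vadd_def)
lemma nth_vsub[simp]: "i < length v \<Longrightarrow> i < length w \<Longrightarrow> vsub v w ! i = v ! i - w ! i"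
  by (simp add: vsub_def)
lemma nth_vneg[simp]: "i < length v \<Longrightarrow> vneg v ! i = - (v ! i)"
  by (simp add: vneg_def)
lemma nth_smul[simp]: "i < length v \<Longrightarrow> smul c v ! i = c * (v ! i)"
  by (simp add: smul_def)

lemma list_eqI2: "length a = length b \<Longrightarrow> (\<And>i. i < length a \<Longrightarrow> a ! i = b ! i) \<Longrightarrow> a = b"
  by (simp add: list_eq_iff_nth_eq)

lemma vadd_comm: "vadd v w = vadd w v"
  by (rule list_eqI2) (auto simp: vadd_def)
lemma vadd_assoc: "length u = length v \<Longrightarrow> length v = length w \<Longrightarrow>
   vadd (vadd u v) w = vadd u (vadd v w)"
  by (rule list_eqI2) auto
lemma vadd_zero[simp]: "vadd v (replicate (length v) 0) = v"
  by (rule list_eqI2) auto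
lemma vadd_zero2[simp]: "length v = k \<Longrightarrow> vadd v (replicate k 0) = v"
  by auto
lemma vadd_zero3[simp]: "length v = k \<Longrightarrow> vadd (replicate k 0) v = v"
  by (metis vadd_comm vadd_zero2)
lemma vsub_zero[simp]: "length v = k \<Longrightarrow> vsub v (replicate k 0) = v"
  by (rule list_eqI2) auto
lemma vsub_self[simp]: "vsub v v = replicate (length v) 0"
  by (rule list_eqI2) auto
lemma vsub_vadd[simp]: "length x = length v \<Longrightarrow> vsub (vadd x v) v = x"
  by (rule list_eqI2) auto
lemma vadd_vsub[simp]: "length x = length v \<Longrightarrow> vadd (vsub x v) v = x"
  by (rule list_eqI2) auto
lemma vsub_vsub: "length x = length v \<Longrightarrow> length v = length w \<Longrightarrow>
   vsub (vsub x v) w = vsub x (vadd v w)"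
  by (rule list_eqI2) auto
lemma vsub_as_vadd: "length x = length v \<Longrightarrow> vsub x v = vadd x (vneg v)"
  by (rule list_eqI2) auto
lemma vadd_vneg[simp]: "vadd v (vneg v) = replicate (length v) 0"
  by (rule list_eqI2) auto
lemma vadd_vneg2[simp]: "vadd (vneg v) v = replicate (length v) 0"
  by (rule list_eqI2) auto
lemma vsub_eq0_iff: "length x = length y \<Longrightarrow> vsub x y = replicate (length x) 0 \<longleftrightarrow> x = y"
  by (auto simp: list_eq_iff_nth_eq)

section \<open>The group\<close>

abbreviation Xs :: "nat \<Rightarrow> int list set" where "Xs k \<equiv> {x. length x = k}"
abbreviation zk :: "nat \<Rightarrow> int list" where "zk k \<equiv> replicate k 0"

lemma wr_mult_eq: "wr_mult m k (f, v) (g, w) =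
   ((\<lambda>x. if length x = k then (f x + g (vsub x v)) mod int m else 0), vadd v w)"
  unfolding wr_mult_def fst_conv snd_conv by (rule refl)

lemma wreath_simps[simp]: "carrier (wreath m k) = wr_carrier m k"
  "monoid.mult (wreath m k) = wr_mult m k" "monoid.one (wreath m k) = (\<lambda>x. 0, replicate k 0)"
  by (simp_all add: wreath_def)

lemma in_wr_carrier: "(f, v) \<in> wr_carrier m k \<longleftrightarrow> length v = k
      \<and> (\<forall>x. 0 \<le> f x \<and> f x < int m) \<and> (\<forall>x. length x \<noteq> k \<longrightarrow> f x = 0)
      \<and> finite {x. f x \<noteq> 0}"
  by (simp add: wr_carrier_def)

lemma wr_mult_closed:
  assumes m: "m > 0" and a: "(f, v) \<in> wr_carrier m k" and b: "(g, w) \<in> wr_carrier m k"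
  shows "wr_mult m k (f, v) (g, w) \<in> wr_carrier m k"
proof -
  have fin: "finite {x. f x \<noteq> 0}" "finite {x. g x \<noteq> 0}" using a b by (auto simp: in_wr_carrier)
  have "{x. (if length x = k then (f x + g (vsub x v)) mod int m else 0) \<noteq> 0}
     \<subseteq> {x. f x \<noteq> 0} \<union> (\<lambda>y. vadd y v) ` {x. g x \<noteq> 0}"
  proof
    fix x assume x: "x \<in> {x. (if length x = k then (f x + g (vsub x v)) mod int m else 0) \<noteq> 0}"
    then have lx: "length x = k" by (auto split: if_splits)
    with x have "f x \<noteq> 0 \<or> g (vsub x v) \<noteq> 0" by auto
    moreover have "x = vadd (vsub x v) v" using lx a by (simp add: in_wr_carrier)
    ultimately show "x \<in> {x. f x \<noteq> 0} \<union> (\<lambda>y. vadd y v) ` {x. g x \<noteq> 0}" by blast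
  qed
  then have "finite {x. (if length x = k then (f x + g (vsub x v)) mod int m else 0) \<noteq> 0}"
    using fin by (meson finite_UnI finite_imageI finite_subset)
  then show ?thesis using a b m by (auto simp: wr_mult_eq in_wr_carrier)
qed

definition wr_inv :: "nat \<Rightarrow> nat \<Rightarrow> ((int list \<Rightarrow> int) \<times> int list) \<Rightarrow> ((int list \<Rightarrow> int) \<times> int list)" where
  "wr_inv m k a = ((\<lambda>x. if length x = k then (- fst a (vadd x (snd a))) mod int m else 0), vneg (snd a))"

lemma wr_inv_closed:
  assumes m: "m > 0" and a: "(f, v) \<in> wr_carrier m k"
  shows "wr_inv m k (f, v) \<in> wr_carrier m k"
proof -
  have fin: "finite {x. f x \<noteq> 0}" using a by (auto simp: in_wr_carrier)
  have "{x. (if length x = k then (- f (vadd x v)) mod int m else 0) \<noteq> 0}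
     \<subseteq> (\<lambda>y. vsub y v) ` {x. f x \<noteq> 0}"
  proof
    fix x assume x: "x \<in> {x. (if length x = k then (- f (vadd x v)) mod int m else 0) \<noteq> 0}"
    then have lx: "length x = k" by (auto split: if_splits)
    with x have "f (vadd x v) \<noteq> 0" by auto
    moreover have "x = vsub (vadd x v) v" using lx a by (simp add: in_wr_carrier)
    ultimately show "x \<in> (\<lambda>y. vsub y v) ` {x. f x \<noteq> 0}" by blast
  qed
  then have F: "finite {x. (if length x = k then (- f (vadd x v)) mod int m else 0) \<noteq> 0}"
    using fin by (meson finite_imageI finite_subset)
  have F2: "finite {x. (length x = k \<longrightarrow> (- f (vadd x v)) mod int m \<noteq> 0) \<and> length x = k}"
    by (rule finite_subset[OF _ F]) auto
  show ?thesis using a m F2 by (auto simp: wr_inv_def in_wr_carrier)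
qed

lemma wr_group: assumes m: "m > 0" shows "group (wreath m k)"
proof (rule groupI)
  fix x y assume "x \<in> carrier (wreath m k)" "y \<in> carrier (wreath m k)"
  then show "x \<otimes>\<^bsub>wreath m k\<^esub> y \<in> carrier (wreath m k)"
    using wr_mult_closed[OF m] by (cases x, cases y) auto
next
  show "\<one>\<^bsub>wreath m k\<^esub> \<in> carrier (wreath m k)" using m by (auto simp: in_wr_carrier)
next
  fix x y z assume x: "x \<in> carrier (wreath m k)" and y: "y \<in> carrier (wreath m k)"
    and z: "z \<in> carrier (wreath m k)"
  obtain f v where fv: "x = (f, v)" by (cases x)
  obtain g w where gw: "y = (g, w)" by (cases y)
  obtain h u where hu: "z = (h, u)" by (cases z)
  have lv: "length v = k" "length w = k" "length u = k"
    using x y z fv gw hu by (auto simp: in_wr_carrier)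
  have e: "(\<lambda>x. if length x = k then ((if length x = k then (f x + g (vsub x v)) mod int m else 0)
        + h (vsub x (vadd v w))) mod int m else 0) =
      (\<lambda>x. if length x = k then (f x + (if length (vsub x v) = k then (g (vsub x v) + h (vsub (vsub x v) w)) mod int m else 0)) mod int m else 0)"
  proof
    fix x show "(if length x = k then ((if length x = k then (f x + g (vsub x v)) mod int m else 0)
        + h (vsub x (vadd v w))) mod int m else 0) =
      (if length x = k then (f x + (if length (vsub x v) = k then (g (vsub x v) + h (vsub (vsub x v) w)) mod int m else 0)) mod int m else 0)"
    proof (cases "length x = k")
      case True
      then show ?thesis using lv
        by (simp add: vsub_vsub mod_add_right_eq mod_add_left_eq add.assoc)
    qed simp
  qed
  show "x \<otimes>\<^bsub>wreath m k\<^esub> y \<otimes>\<^bsub>wreath m k\<^esub> z = x \<otimes>\<^bsub>wreath m k\<^esub> (y \<otimes>\<^bsub>wreath m k\<^esub> z)"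
    unfolding fv gw hu wreath_simps wr_mult_eq e using lv by (simp add: vadd_assoc)
next
  fix x assume x: "x \<in> carrier (wreath m k)"
  obtain f v where fv: "x = (f, v)" by (cases x)
  have "length v = k" "\<forall>x. 0 \<le> f x \<and> f x < int m" "\<forall>x. length x \<noteq> k \<longrightarrow> f x = 0"
    using x fv by (auto simp: in_wr_carrier)
  then show "\<one>\<^bsub>wreath m k\<^esub> \<otimes>\<^bsub>wreath m k\<^esub> x = x"
    unfolding fv by (auto simp: wr_mult_eq fun_eq_iff)
next
  fix x assume x: "x \<in> carrier (wreath m k)"
  obtain f v where fv: "x = (f, v)" by (cases x)
  have c: "length v = k" "\<forall>x. 0 \<le> f x \<and> f x < int m" "\<forall>x. length x \<noteq> k \<longrightarrow> f x = 0"
    using x fv by (auto simp: in_wr_carrier)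
  have ic: "wr_inv m k (f, v) \<in> carrier (wreath m k)" using wr_inv_closed[OF m] x fv by auto
  have e: "(\<lambda>x. if length x = k then ((if length x = k then (- f (vadd x v)) mod int m else 0)
        + f (vsub x (vneg v))) mod int m else 0) = (\<lambda>x. 0)"
  proof
    fix x show "(if length x = k then ((if length x = k then (- f (vadd x v)) mod int m else 0)
        + f (vsub x (vneg v))) mod int m else 0) = 0"
    proof (cases "length x = k")
      case True
      then have "vsub x (vneg v) = vadd x v" using c(1)
        by (intro list_eqI2) auto
      then show ?thesis using True by (simp add: mod_add_left_eq)
    qed simp
  qed
  have "wr_inv m k (f, v) \<otimes>\<^bsub>wreath m k\<^esub> x = \<one>\<^bsub>wreath m k\<^esub>"
    unfolding fv wreath_simps wr_inv_def fst_conv snd_conv wr_mult_eq e using c(1) by simp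
  with ic show "\<exists>y\<in>carrier (wreath m k). y \<otimes>\<^bsub>wreath m k\<^esub> x = \<one>\<^bsub>wreath m k\<^esub>" by blast
qed


definition badd :: "nat \<Rightarrow> nat \<Rightarrow> (int list \<Rightarrow> int) \<Rightarrow> (int list \<Rightarrow> int) \<Rightarrow> (int list \<Rightarrow> int)" where
  "badd m k f g = (\<lambda>x. if length x = k then (f x + g x) mod int m else 0)"

definition bpow :: "nat \<Rightarrow> nat \<Rightarrow> int \<Rightarrow> (int list \<Rightarrow> int) \<Rightarrow> (int list \<Rightarrow> int)" where
  "bpow m k c f = (\<lambda>x. if length x = k then (c * f x) mod int m else 0)"

definition tau :: "nat \<Rightarrow> int list \<Rightarrow> (int list \<Rightarrow> int) \<Rightarrow> (int list \<Rightarrow> int)" where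
  "tau k v u = (\<lambda>x. if length x = k then u (vsub x v) else 0)"

lemma B_mult: "wr_mult m k (f, zk k) (g, zk k) = (badd m k f g, zk k)"
  by (auto simp: wr_mult_eq badd_def fun_eq_iff)

lemma wr_pow_snd:
  assumes m: "m > 0" and a: "(f, v) \<in> wr_carrier m k"
  shows "snd ((f, v) [^]\<^bsub>wreath m k\<^esub> (n::nat)) = smul (int n) v"
proof (induction n)
  case 0
  have "length v = k" using a by (simp add: in_wr_carrier)
  then show ?case by (intro list_eqI2) auto
next
  case (Suc n)
  interpret group "wreath m k" by (rule wr_group[OF m])
  have lv: "length v = k" using a by (simp add: in_wr_carrier)
  obtain g w where gw: "(f, v) [^]\<^bsub>wreath m k\<^esub> n = (g, w)" by (cases "(f, v) [^]\<^bsub>wreath m k\<^esub> n")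
  have "(f, v) [^]\<^bsub>wreath m k\<^esub> Suc n = (f, v) [^]\<^bsub>wreath m k\<^esub> n \<otimes>\<^bsub>wreath m k\<^esub> (f, v)"
    by (simp add: nat_pow_Suc)
  then have "snd ((f, v) [^]\<^bsub>wreath m k\<^esub> Suc n) = vadd w v"
    by (simp add: gw wr_mult_eq)
  also have "\<dots> = smul (int (Suc n)) v" using Suc gw lv
    by (intro list_eqI2) (auto simp: algebra_simps)
  finally show ?case .
qed

lemma B_pow:
  assumes m: "m > 0" and a: "(f, zk k) \<in> wr_carrier m k"
  shows "(f, zk k) [^]\<^bsub>wreath m k\<^esub> (n::nat) = (bpow m k (int n) f, zk k)"
proof (induction n)
  case 0
  have "\<forall>x. length x \<noteq> k \<longrightarrow> f x = 0" using a by (simp add: in_wr_carrier)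
  then show ?case by (auto simp: bpow_def fun_eq_iff)
next
  case (Suc n)
  interpret group "wreath m k" by (rule wr_group[OF m])
  have "(f, zk k) [^]\<^bsub>wreath m k\<^esub> Suc n = (f, zk k) [^]\<^bsub>wreath m k\<^esub> n \<otimes>\<^bsub>wreath m k\<^esub> (f, zk k)"
    by (simp add: nat_pow_Suc)
  also have "\<dots> = (bpow m k (int (Suc n)) f, zk k)"
    unfolding Suc wreath_simps B_mult
    by (auto simp: badd_def bpow_def fun_eq_iff mod_add_left_eq mod_add_right_eq algebra_simps)
  finally show ?case .
qed

lemma tau_carrier:
  assumes a: "(u, zk k) \<in> wr_carrier m k" and lv: "length v = k"
  shows "(tau k v u, zk k) \<in> wr_carrier m k"
proof -
  have fin: "finite {x. u x \<noteq> 0}" using a by (simp add: in_wr_carrier)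
  have "{x. tau k v u x \<noteq> 0} \<subseteq> (\<lambda>y. vadd y v) ` {x. u x \<noteq> 0}"
  proof
    fix x assume "x \<in> {x. tau k v u x \<noteq> 0}"
    then have lx: "length x = k" and "u (vsub x v) \<noteq> 0" by (auto simp: tau_def split: if_splits)
    moreover have "x = vadd (vsub x v) v" using lx lv by simp
    ultimately show "x \<in> (\<lambda>y. vadd y v) ` {x. u x \<noteq> 0}" by blast
  qed
  then have "finite {x. tau k v u x \<noteq> 0}" using fin by (meson finite_imageI finite_subset)
  then show ?thesis using a by (auto simp: in_wr_carrier tau_def)
qed

lemma conj_B:
  assumes a: "(c, v) \<in> wr_carrier m k" and b: "(u, zk k) \<in> wr_carrier m k"
  shows "wr_mult m k (c, v) (u, zk k) = wr_mult m k (tau k v u, zk k) (c, v)"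
proof -
  have lv: "length v = k" using a by (simp add: in_wr_carrier)
  show ?thesis using lv by (auto simp: wr_mult_eq tau_def fun_eq_iff add.commute)
qed

lemma badd_carrier: "m > 0 \<Longrightarrow> (f, zk k) \<in> wr_carrier m k \<Longrightarrow> (g, zk k) \<in> wr_carrier m k \<Longrightarrow>
   (badd m k f g, zk k) \<in> wr_carrier m k"
  by (metis B_mult wr_mult_closed)

locale wraut =
  fixes m k :: nat and \<phi> :: "((int list \<Rightarrow> int) \<times> int list) \<Rightarrow> ((int list \<Rightarrow> int) \<times> int list)"
  assumes m_pos: "m > 0" and phi_iso: "\<phi> \<in> iso (wreath m k) (wreath m k)"
begin

abbreviation "W \<equiv> wreath m k"

lemma grp: "group W" by (rule wr_group[OF m_pos])

lemma ghom: "group_hom W W \<phi>"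
  using grp phi_iso by (simp add: group_hom_def group_hom_axioms_def iso_def)

lemma phi_mult: "x \<in> carrier W \<Longrightarrow> y \<in> carrier W \<Longrightarrow> \<phi> (wr_mult m k x y) = wr_mult m k (\<phi> x) (\<phi> y)"
  using group_hom.hom_mult[OF ghom] by fastforce

lemma phi_carrier: "x \<in> wr_carrier m k \<Longrightarrow> \<phi> x \<in> wr_carrier m k"
  using phi_iso by (auto simp: iso_def hom_def)

lemma phi_inj: "inj_on \<phi> (wr_carrier m k)"
  using phi_iso by (auto simp: iso_def bij_betw_def)

lemma phi_surj: "\<phi> ` (wr_carrier m k) = wr_carrier m k"
  using phi_iso by (auto simp: iso_def bij_betw_def)

lemma phi_pow: "x \<in> carrier W \<Longrightarrow> \<phi> (x [^]\<^bsub>W\<^esub> (n::nat)) = \<phi> x [^]\<^bsub>W\<^esub> n"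
  using group_hom.hom_nat_pow[OF ghom] by blast

lemma phi_one: "\<phi> (\<lambda>x. 0, zk k) = (\<lambda>x. 0, zk k)"
  using group_hom.hom_one[OF ghom] by simp

definition mu :: "int list \<Rightarrow> int list" where "mu v = snd (\<phi> (\<lambda>x. 0, v))"
definition psi :: "(int list \<Rightarrow> int) \<Rightarrow> (int list \<Rightarrow> int)" where "psi f = fst (\<phi> (f, zk k))"

lemma zero_v_carrier: "length v = k \<Longrightarrow> ((\<lambda>x. 0), v) \<in> wr_carrier m k"
  using m_pos by (simp add: in_wr_carrier)

lemma torsion_snd:
  assumes a: "(f, v) \<in> wr_carrier m k" and t: "(f, v) [^]\<^bsub>W\<^esub> m = \<one>\<^bsub>W\<^esub>"
  shows "v = zk k"
proof -
  have lv: "length v = k" using a by (simp add: in_wr_carrier)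
  have "smul (int m) v = zk k" using wr_pow_snd[OF m_pos a, of m] t by simp
  then have "\<forall>i<k. int m * v ! i = 0" using lv
    by (metis length_replicate length_smul nth_replicate nth_smul)
  then have "\<forall>i<k. v ! i = 0" using m_pos by simp
  then show ?thesis using lv by (intro list_eqI2) auto
qed

lemma B_torsion:
  assumes a: "(f, zk k) \<in> wr_carrier m k"
  shows "(f, zk k) [^]\<^bsub>W\<^esub> m = \<one>\<^bsub>W\<^esub>"
proof -
  have "\<forall>x. length x \<noteq> k \<longrightarrow> f x = 0" using a by (simp add: in_wr_carrier)
  then show ?thesis unfolding B_pow[OF m_pos a] by (auto simp: bpow_def fun_eq_iff)
qed

lemma phi_B:
  assumes a: "(f, zk k) \<in> wr_carrier m k"
  shows "\<phi> (f, zk k) = (psi f, zk k)"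
proof -
  obtain g v where gv: "\<phi> (f, zk k) = (g, v)" by (cases "\<phi> (f, zk k)")
  have c: "(g, v) \<in> wr_carrier m k" using phi_carrier[OF a] gv by simp
  have "(g, v) [^]\<^bsub>W\<^esub> m = \<one>\<^bsub>W\<^esub>"
    using phi_pow[of "(f, zk k)" m] B_torsion[OF a] a gv phi_one by simp
  then have "v = zk k" using torsion_snd[OF c] by simp
  then show ?thesis using gv by (simp add: psi_def)
qed

lemma psi_carrier: "(f, zk k) \<in> wr_carrier m k \<Longrightarrow> (psi f, zk k) \<in> wr_carrier m k"
  using phi_B phi_carrier by fastforce

lemma split_elem:
  assumes a: "(f, v) \<in> wr_carrier m k"
  shows "(f, v) = wr_mult m k (f, zk k) (\<lambda>x. 0, v)" "(f, zk k) \<in> wr_carrier m k"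
proof -
  have c: "length v = k" "\<forall>x. 0 \<le> f x \<and> f x < int m" "\<forall>x. length x \<noteq> k \<longrightarrow> f x = 0"
    using a by (auto simp: in_wr_carrier)
  then show "(f, v) = wr_mult m k (f, zk k) (\<lambda>x. 0, v)" by (auto simp: wr_mult_eq fun_eq_iff)
  show "(f, zk k) \<in> wr_carrier m k" using a by (simp add: in_wr_carrier)
qed

lemma snd_phi:
  assumes a: "(f, v) \<in> wr_carrier m k"
  shows "snd (\<phi> (f, v)) = mu v"
proof -
  have lv: "length v = k" using a by (simp add: in_wr_carrier)
  have "\<phi> (f, v) = wr_mult m k (\<phi> (f, zk k)) (\<phi> (\<lambda>x. 0, v))"
    using split_elem[OF a] phi_mult zero_v_carrier[OF lv] by (metis wreath_simps(1))
  also have "\<dots> = wr_mult m k (psi f, zk k) (\<phi> (\<lambda>x. 0, v))" using phi_B split_elem(2)[OF a] by simp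
  finally have "snd (\<phi> (f, v)) = vadd (zk k) (mu v)"
    by (cases "\<phi> (\<lambda>x. 0, v)") (simp add: wr_mult_eq mu_def)
  moreover have "length (mu v) = k" using phi_carrier[OF zero_v_carrier[OF lv]] unfolding mu_def
    by (cases "\<phi> (\<lambda>x. 0, v)") (simp add: in_wr_carrier)
  ultimately show ?thesis by simp
qed

lemma mu_len: "length v = k \<Longrightarrow> length (mu v) = k"
  using phi_carrier[OF zero_v_carrier] unfolding mu_def
  by (metis in_wr_carrier prod.collapse)

lemma mu_add:
  assumes "length v = k" "length w = k"
  shows "mu (vadd v w) = vadd (mu v) (mu w)"
proof -
  have "wr_mult m k (\<lambda>x. 0, v) (\<lambda>x. 0, w) = (\<lambda>x. 0, vadd v w)"
    by (simp add: wr_mult_eq fun_eq_iff)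
  then have "\<phi> (\<lambda>x. 0, vadd v w) = wr_mult m k (\<phi> (\<lambda>x. 0, v)) (\<phi> (\<lambda>x. 0, w))"
    using phi_mult zero_v_carrier assms by (metis wreath_simps(1))
  then show ?thesis unfolding mu_def
    by (cases "\<phi> (\<lambda>x. 0, v)", cases "\<phi> (\<lambda>x. 0, w)") (simp add: wr_mult_eq)
qed

lemma mu_zero: "mu (zk k) = zk k"
proof -
  have "mu (zk k) = vadd (mu (zk k)) (mu (zk k))" using mu_add[of "zk k" "zk k"] by simp
  moreover have "length (mu (zk k)) = k" by (simp add: mu_len)
  ultimately show ?thesis
    by (metis vadd_vneg vadd_assoc length_vneg vadd_zero2)
qed

lemma mu_vsub:
  assumes "length v = k" "length w = k"
  shows "mu (vsub v w) = vsub (mu v) (mu w)"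
proof -
  have "mu v = vadd (mu (vsub v w)) (mu w)" using mu_add[of "vsub v w" w] assms by simp
  then show ?thesis using assms mu_len by (metis length_vsub min.idem vsub_vadd)
qed

lemma mu_kernel:
  assumes lv: "length v = k" and z: "mu v = zk k"
  shows "v = zk k"
proof -
  obtain c where c: "\<phi> (\<lambda>x. 0, v) = (c, zk k)"
    using z unfolding mu_def by (metis prod.collapse)
  have cc: "(c, zk k) \<in> wr_carrier m k" using c phi_carrier[OF zero_v_carrier[OF lv]] by simp
  have "\<phi> ((\<lambda>x. 0, v) [^]\<^bsub>W\<^esub> m) = \<phi> (\<one>\<^bsub>W\<^esub>)"
    using phi_pow[of "(\<lambda>x. 0, v)" m] zero_v_carrier[OF lv] c B_torsion[OF cc] phi_one by simp
  moreover have "(\<lambda>x. 0, v) [^]\<^bsub>W\<^esub> m \<in> carrier W"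
    using monoid.nat_pow_closed[OF group.is_monoid[OF grp]] zero_v_carrier[OF lv] by simp
  moreover have "\<one>\<^bsub>W\<^esub> \<in> carrier W" using monoid.one_closed[OF group.is_monoid[OF grp]] by simp
  ultimately have "(\<lambda>x. 0, v) [^]\<^bsub>W\<^esub> m = \<one>\<^bsub>W\<^esub>"
    using phi_inj by (auto simp: inj_on_def)
  then show ?thesis using torsion_snd zero_v_carrier[OF lv] by blast
qed

lemma mu_inj: "inj_on mu (Xs k)"
proof (rule inj_onI)
  fix v w assume v: "v \<in> Xs k" and w: "w \<in> Xs k" and e: "mu v = mu w"
  have "mu (vsub v w) = zk k" using mu_vsub[of v w] v w e mu_len by simp
  then have "vsub v w = zk k" using mu_kernel v w by simp
  then show "v = w" using v w vsub_eq0_iff[of v w] by simp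
qed

lemma mu_surj: "length y = k \<Longrightarrow> \<exists>v. length v = k \<and> mu v = y"
proof -
  assume ly: "length y = k"
  then have "(\<lambda>x. 0, y) \<in> \<phi> ` wr_carrier m k" using phi_surj zero_v_carrier by simp
  then obtain f v where fv: "(f, v) \<in> wr_carrier m k" "\<phi> (f, v) = (\<lambda>x. 0, y)" by auto
  then have "mu v = y" using snd_phi by force
  then show ?thesis using fv by (auto simp: in_wr_carrier)
qed

lemma psi_add:
  assumes a: "(f, zk k) \<in> wr_carrier m k" and b: "(g, zk k) \<in> wr_carrier m k"
  shows "psi (badd m k f g) = badd m k (psi f) (psi g)"
proof -
  have "\<phi> (badd m k f g, zk k) = wr_mult m k (\<phi> (f, zk k)) (\<phi> (g, zk k))"
    using phi_mult[of "(f, zk k)" "(g, zk k)"] a b B_mult by (metis wreath_simps(1))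
  then have "(psi (badd m k f g), zk k) = (badd m k (psi f) (psi g), zk k)"
    using phi_B a b badd_carrier[OF m_pos a b] B_mult by metis
  then show ?thesis by simp
qed

lemma psi_pow:
  assumes a: "(f, zk k) \<in> wr_carrier m k"
  shows "psi (bpow m k (int n) f) = bpow m k (int n) (psi f)"
proof -
  have "\<phi> ((f, zk k) [^]\<^bsub>W\<^esub> n) = \<phi> (f, zk k) [^]\<^bsub>W\<^esub> n" using phi_pow a by simp
  then have "\<phi> (bpow m k (int n) f, zk k) = (bpow m k (int n) (psi f), zk k)"
    using B_pow[OF m_pos a] B_pow[OF m_pos psi_carrier[OF a]] phi_B[OF a] by simp
  moreover have "(bpow m k (int n) f, zk k) \<in> wr_carrier m k"
    using B_pow[OF m_pos a] monoid.nat_pow_closed[OF group.is_monoid[OF grp]] a by (metis wreath_simps(1))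
  ultimately show ?thesis using phi_B by simp
qed

lemma psi_tau:
  assumes a: "(u, zk k) \<in> wr_carrier m k" and ly: "length y = k"
  shows "psi (tau k y u) = tau k (mu y) (psi u)"
proof -
  interpret group W by (rule grp)
  have c0: "(\<lambda>x. 0, y) \<in> carrier W" using zero_v_carrier[OF ly] by simp
  have ct: "(tau k y u, zk k) \<in> carrier W" using tau_carrier[OF a ly] by simp
  have e1: "wr_mult m k (\<lambda>x. 0, y) (u, zk k) = wr_mult m k (tau k y u, zk k) (\<lambda>x. 0, y)"
    using conj_B zero_v_carrier[OF ly] a by blast
  have "\<phi> (wr_mult m k (\<lambda>x. 0, y) (u, zk k)) = wr_mult m k (\<phi> (\<lambda>x. 0, y)) (psi u, zk k)"
    using phi_mult[of "(\<lambda>x. 0, y)" "(u, zk k)"] c0 a phi_B by simp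
  moreover have "\<phi> (wr_mult m k (tau k y u, zk k) (\<lambda>x. 0, y)) = wr_mult m k (psi (tau k y u), zk k) (\<phi> (\<lambda>x. 0, y))"
    using phi_mult[of "(tau k y u, zk k)" "(\<lambda>x. 0, y)"] c0 ct phi_B tau_carrier[OF a ly] by simp
  moreover obtain c where c: "\<phi> (\<lambda>x. 0, y) = (c, mu y)" unfolding mu_def by (metis prod.collapse)
  moreover have cc: "(c, mu y) \<in> wr_carrier m k" using c phi_carrier c0 by force
  ultimately have "wr_mult m k (psi (tau k y u), zk k) (c, mu y) = wr_mult m k (tau k (mu y) (psi u), zk k) (c, mu y)"
    using e1 conj_B[OF cc psi_carrier[OF a]] by simp
  moreover have "(psi (tau k y u), zk k) \<in> carrier W" using psi_carrier[OF tau_carrier[OF a ly]] by simp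
  moreover have "(tau k (mu y) (psi u), zk k) \<in> carrier W"
    using tau_carrier[OF psi_carrier[OF a]] mu_len[OF ly] by simp
  ultimately have "(psi (tau k y u), zk k) = (tau k (mu y) (psi u), zk k)"
    using right_cancel cc by (metis wreath_simps)
  then show ?thesis by simp
qed

lemma inv_wraut: "wraut m k (inv_into (wr_carrier m k) \<phi>)"
  using group.iso_set_sym[OF grp phi_iso] m_pos by (simp add: wraut_def)

end


section \<open>Lexicographic order facts\<close>

lemma vadd_Cons[simp]: "vadd (x # xs) (y # ys) = (x + y) # vadd xs ys"
  by (simp add: vadd_def)
lemma vadd_Nil[simp]: "vadd [] ys = []" "vadd xs [] = []"
  by (simp_all add: vadd_def)

lemma lex_vadd_less:
  "length a = length b \<Longrightarrow> length c = length a \<Longrightarrow> a < b \<Longrightarrow> vadd c a < vadd c b"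
proof (induction a arbitrary: b c)
  case Nil
  then show ?case by simp
next
  case (Cons x xs)
  then obtain y ys where b: "b = y # ys" by (cases b) auto
  from Cons obtain z zs where c: "c = z # zs" by (cases c) auto
  from Cons.prems b have "x < y \<or> x = y \<and> xs < ys" by simp
  then show ?case using Cons b c by auto
qed

lemma lex_vadd_le:
  "length a = length b \<Longrightarrow> length c = length a \<Longrightarrow> a \<le> b \<Longrightarrow> vadd c a \<le> vadd c b"
  using lex_vadd_less by (metis order.order_iff_strict)

lemma lex_vadd_le2:
  "length a = length b \<Longrightarrow> length c = length a \<Longrightarrow> a \<le> b \<Longrightarrow> vadd a c \<le> vadd b c"
  using lex_vadd_le by (metis vadd_comm)

lemma lex_vadd_less2:
  "length a = length b \<Longrightarrow> length c = length a \<Longrightarrow> a < b \<Longrightarrow> vadd a c < vadd b c"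
  using lex_vadd_less by (metis vadd_comm)

section \<open>Top term argument\<close>

lemma sum_single_mod:
  fixes p :: int
  assumes "finite S" "y1 \<in> S" "\<forall>y\<in>S - {y1}. p dvd t y"
  shows "(\<Sum>y\<in>S. t y) mod p = t y1 mod p"
proof -
  have "(\<Sum>y\<in>S. t y) = t y1 + (\<Sum>y\<in>S - {y1}. t y)" using assms by (simp add: sum.remove)
  moreover have "p dvd (\<Sum>y\<in>S - {y1}. t y)" using assms by (intro dvd_sum) auto
  ultimately show ?thesis by (metis add.right_neutral dvd_imp_mod_0 mod_add_right_eq)
qed

lemma top_term:
  fixes p :: int and a b :: "int list \<Rightarrow> int" and M :: "int list \<Rightarrow> int list"
  assumes p: "prime p" and S: "finite S" "S \<subseteq> Xs k"
    and M: "inj_on M (Xs k)" "\<And>y. length y = k \<Longrightarrow> length (M y) = k"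
    and finb: "finite {x. b x \<noteq> 0}"
    and H: "\<And>z. length z = k \<Longrightarrow> (if z = zk k then 1 else 0) mod p = (\<Sum>y\<in>S. a y * b (vsub z (M y))) mod p"
  shows "\<exists>w. length w = k \<and> (\<forall>x. length x = k \<longrightarrow> (p dvd b x \<longleftrightarrow> x \<noteq> w))"
proof -
  have p1: "p > 1" using p by (simp add: prime_int_iff)
  define Y where "Y = {y \<in> S. \<not> p dvd a y}"
  define U where "U = {x. length x = k \<and> \<not> p dvd b x}"
  have finY: "finite Y" using S by (simp add: Y_def)
  have finU: "finite U" by (rule finite_subset[OF _ finb]) (auto simp: U_def)
  have H0: "(\<Sum>y\<in>S. a y * b (vsub (zk k) (M y))) mod p \<noteq> 0"
    using H[of "zk k"] p1 by simp
  have Yne: "Y \<noteq> {}"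
  proof
    assume "Y = {}"
    then have "p dvd (\<Sum>y\<in>S. a y * b (vsub (zk k) (M y)))" by (intro dvd_sum) (auto simp: Y_def)
    then show False using H0 by simp
  qed
  have Une: "U \<noteq> {}"
  proof
    assume U0: "U = {}"
    have "p dvd (\<Sum>y\<in>S. a y * b (vsub (zk k) (M y)))"
    proof (intro dvd_sum)
      fix y assume "y \<in> S"
      then have "length (vsub (zk k) (M y)) = k" using S M by auto
      then have "p dvd b (vsub (zk k) (M y))" using U0 by (auto simp: U_def)
      then show "p dvd a y * b (vsub (zk k) (M y))" by simp
    qed
    then show False using H0 by simp
  qed
  have Yk: "\<And>y. y \<in> Y \<Longrightarrow> length y = k" using S by (auto simp: Y_def)
  have MYk: "\<And>y. y \<in> M ` Y \<Longrightarrow> length y = k" using Yk M by auto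
  have Uk: "\<And>x. x \<in> U \<Longrightarrow> length x = k" by (auto simp: U_def)
  define ym where "ym = Max (M ` Y)"
  define um where "um = Max U"
  have ymin: "ym \<in> M ` Y" using Yne finY by (simp add: ym_def)
  then obtain y1 where y1: "y1 \<in> Y" "M y1 = ym" by auto
  have umin: "um \<in> U" using Une finU by (simp add: um_def)
  have lym: "length ym = k" using MYk ymin by simp
  have lum: "length um = k" using Uk umin by simp
  have zmax: "vadd ym um = zk k"
  proof -
    define z where "z = vadd ym um"
    have lz: "length z = k" using lym lum by (simp add: z_def)
    have "(\<Sum>y\<in>S. a y * b (vsub z (M y))) mod p = (a y1 * b (vsub z (M y1))) mod p"
    proof (rule sum_single_mod[OF S(1)])
      show "y1 \<in> S" using y1 by (simp add: Y_def)
      show "\<forall>y\<in>S - {y1}. p dvd a y * b (vsub z (M y))"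
      proof
        fix y assume y: "y \<in> S - {y1}"
        show "p dvd a y * b (vsub z (M y))"
        proof (cases "p dvd a y")
          case False
          then have yY: "y \<in> Y" using y by (simp add: Y_def)
          have "M y \<noteq> ym" using y1 yY y M(1) Yk unfolding inj_on_def by auto
          moreover have "M y \<le> ym" using finY yY by (simp add: ym_def)
          ultimately have lt: "M y < ym" by simp
          have lMy: "length (M y) = k" using MYk yY by simp
          define x where "x = vsub z (M y)"
          have lx: "length x = k" using lz lMy by (simp add: x_def)
          have "x \<notin> U"
          proof
            assume xU: "x \<in> U"
            then have "x \<le> um" using finU by (simp add: um_def)
            have "vadd (M y) x < vadd ym x" using lex_vadd_less2[OF _ _ lt] lMy lym lx by simp
            also have "\<dots> \<le> vadd ym um" using lex_vadd_le[OF _ _ \<open>x \<le> um\<close>] lx lum lym by simp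
            finally have "vadd (M y) x < z" by (simp add: z_def)
            moreover have "vadd (M y) x = z" unfolding x_def using lz lMy
              by (metis vadd_comm vadd_vsub)
            ultimately show False by simp
          qed
          then have "p dvd b x" using lx by (simp add: U_def)
          then show ?thesis by (simp add: x_def)
        qed simp
      qed
    qed
    moreover have "vsub z (M y1) = um" using y1 lym lum by (simp add: z_def vadd_comm)
    moreover have "\<not> p dvd a y1 * b um"
      using y1 umin p by (simp add: Y_def U_def prime_dvd_mult_iff)
    ultimately have "(\<Sum>y\<in>S. a y * b (vsub z (M y))) mod p \<noteq> 0" by (simp add: dvd_eq_mod_eq_0)
    then have "z = zk k" using H[OF lz] by (auto split: if_splits)
    then show ?thesis by (simp add: z_def)
  qed
  define yn where "yn = Min (M ` Y)"
  define un where "un = Min U"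
  have ynin: "yn \<in> M ` Y" using Yne finY by (simp add: yn_def)
  then obtain y2 where y2: "y2 \<in> Y" "M y2 = yn" by auto
  have unin: "un \<in> U" using Une finU by (simp add: un_def)
  have lyn: "length yn = k" using MYk ynin by simp
  have lun: "length un = k" using Uk unin by simp
  have zmin: "vadd yn un = zk k"
  proof -
    define z where "z = vadd yn un"
    have lz: "length z = k" using lyn lun by (simp add: z_def)
    have "(\<Sum>y\<in>S. a y * b (vsub z (M y))) mod p = (a y2 * b (vsub z (M y2))) mod p"
    proof (rule sum_single_mod[OF S(1)])
      show "y2 \<in> S" using y2 by (simp add: Y_def)
      show "\<forall>y\<in>S - {y2}. p dvd a y * b (vsub z (M y))"
      proof
        fix y assume y: "y \<in> S - {y2}"
        show "p dvd a y * b (vsub z (M y))"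
        proof (cases "p dvd a y")
          case False
          then have yY: "y \<in> Y" using y by (simp add: Y_def)
          have "M y \<noteq> yn" using y2 yY y M(1) Yk unfolding inj_on_def by auto
          moreover have "yn \<le> M y" using finY yY by (simp add: yn_def)
          ultimately have lt: "yn < M y" by simp
          have lMy: "length (M y) = k" using MYk yY by simp
          define x where "x = vsub z (M y)"
          have lx: "length x = k" using lz lMy by (simp add: x_def)
          have "x \<notin> U"
          proof
            assume xU: "x \<in> U"
            then have "un \<le> x" using finU by (simp add: un_def)
            have "vadd yn un \<le> vadd yn x" using lex_vadd_le[OF _ _ \<open>un \<le> x\<close>] lx lun lyn by simp
            also have "\<dots> < vadd (M y) x" using lex_vadd_less2[OF _ _ lt] lMy lyn lx by simp
            finally have "z < vadd (M y) x" by (simp add: z_def)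
            moreover have "vadd (M y) x = z" unfolding x_def using lz lMy
              by (metis vadd_comm vadd_vsub)
            ultimately show False by simp
          qed
          then have "p dvd b x" using lx by (simp add: U_def)
          then show ?thesis by (simp add: x_def)
        qed simp
      qed
    qed
    moreover have "vsub z (M y2) = un" using y2 lyn lun by (simp add: z_def vadd_comm)
    moreover have "\<not> p dvd a y2 * b un"
      using y2 unin p by (simp add: Y_def U_def prime_dvd_mult_iff)
    ultimately have "(\<Sum>y\<in>S. a y * b (vsub z (M y))) mod p \<noteq> 0" by (simp add: dvd_eq_mod_eq_0)
    then have "z = zk k" using H[OF lz] by (auto split: if_splits)
    then show ?thesis by (simp add: z_def)
  qed
  have "un \<le> um" using finU unin by (simp add: um_def)
  have "yn \<le> ym" using finY ynin by (simp add: ym_def)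
  have equ: "un = um"
  proof (rule ccontr)
    assume "un \<noteq> um"
    then have "un < um" using \<open>un \<le> um\<close> by simp
    then have "vadd yn un < vadd yn um" using lex_vadd_less lun lum lyn by simp
    also have "\<dots> \<le> vadd ym um" using lex_vadd_le2[OF _ _ \<open>yn \<le> ym\<close>] lyn lym lum by simp
    finally show False using zmin zmax by simp
  qed
  have "\<forall>x::int list. length x = k \<longrightarrow> (p dvd b x \<longleftrightarrow> x \<noteq> um)"
  proof (intro allI impI)
    fix x :: "int list" assume lx: "length x = k"
    show "p dvd b x \<longleftrightarrow> x \<noteq> um"
    proof
      assume "p dvd b x" then show "x \<noteq> um" using umin by (auto simp: U_def)
    next
      assume xne: "x \<noteq> um"
      show "p dvd b x"
      proof (rule ccontr)
        assume "\<not> p dvd b x"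
        then have xU: "x \<in> U" using lx by (simp add: U_def)
        then have "x \<le> um" "un \<le> x" using finU by (simp_all add: um_def un_def)
        then show False using equ xne by simp
      qed
    qed
  qed
  then show ?thesis using lum by blast
qed


definition delta :: "int list \<Rightarrow> int list \<Rightarrow> int" where "delta y = (\<lambda>x. if x = y then 1 else 0)"

lemma mod_add_mod_dvd: "(p::int) dvd m \<Longrightarrow> (a + b mod m) mod p = (a + b) mod p"
  by (metis mod_add_right_eq mod_mod_cancel)

locale wrp = wraut +
  fixes p :: int
  assumes p_prime: "prime p" and p_dvd: "p dvd int m"
begin

lemma m_gt1: "m > 1"
proof -
  have "p > 1" using p_prime by (simp add: prime_int_iff)
  moreover have "p \<le> int m" using p_dvd m_pos by (simp add: zdvd_imp_le)
  ultimately show ?thesis by simp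
qed

lemma delta_carrier: "length y = k \<Longrightarrow> (delta y, zk k) \<in> wr_carrier m k"
  using m_gt1 by (auto simp: in_wr_carrier delta_def)

lemma tau_delta: "length y = k \<Longrightarrow> tau k y (delta (zk k)) = delta y"
  by (auto simp: tau_def delta_def fun_eq_iff) (metis vsub_eq0_iff)

definition u0 where "u0 = psi (delta (zk k))"

lemma psi_delta: "length y = k \<Longrightarrow> psi (delta y) = tau k (mu y) u0"
  using psi_tau[OF delta_carrier, of "zk k" y] tau_delta u0_def by simp

lemma psi_zero: "psi (\<lambda>x. 0) = (\<lambda>x. 0)"
  using phi_B[of "\<lambda>x. 0"] phi_one m_pos by (simp add: in_wr_carrier)

lemma lincomb_aux:
  "finite S \<Longrightarrow> \<forall>f. (f, zk k) \<in> wr_carrier m k \<and> {x. f x \<noteq> 0} = S \<longrightarrow>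
     (\<forall>z. length z = k \<longrightarrow> psi f z mod p = (\<Sum>y\<in>S. f y * psi (delta y) z) mod p)"
proof (induction S rule: finite_induct)
  case empty
  show ?case
  proof (intro allI impI)
    fix f :: "int list \<Rightarrow> int" and z :: "int list"
    assume "(f, zk k) \<in> wr_carrier m k \<and> {x. f x \<noteq> 0} = {}"
    then have "f = (\<lambda>x. 0)" by auto
    then show "psi f z mod p = (\<Sum>y\<in>{}. f y * psi (delta y) z) mod p" using psi_zero by simp
  qed
next
  case (insert y S)
  show ?case
  proof (intro allI impI)
    fix f :: "int list \<Rightarrow> int" and z :: "int list"
    assume A: "(f, zk k) \<in> wr_carrier m k \<and> {x. f x \<noteq> 0} = insert y S" and lz: "length z = k"
    have fc: "(f, zk k) \<in> wr_carrier m k" using A by simp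
    have fprops: "\<forall>x. 0 \<le> f x \<and> f x < int m" "\<forall>x. length x \<noteq> k \<longrightarrow> f x = 0"
      using fc by (auto simp: in_wr_carrier)
    have fy: "f y \<noteq> 0" using A by auto
    then have ly: "length y = k" using fprops by auto
    define f' where "f' = f(y := 0)"
    have f'c: "(f', zk k) \<in> wr_carrier m k"
    proof -
      have "{x. f' x \<noteq> 0} \<subseteq> {x. f x \<noteq> 0}" by (auto simp: f'_def)
      then have "finite {x. f' x \<noteq> 0}" using A insert.hyps(1) by (metis finite_insert finite_subset)
      then show ?thesis using fc m_pos by (auto simp: in_wr_carrier f'_def)
    qed
    have suppf': "{x. f' x \<noteq> 0} = S" using A insert.hyps(2) by (auto simp: f'_def)
    have IH: "psi f' z mod p = (\<Sum>y\<in>S. f' y * psi (delta y) z) mod p"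
      using insert.IH f'c suppf' lz by blast
    have fy0: "0 \<le> f y" using fprops by auto
    have dec: "f = badd m k f' (bpow m k (int (nat (f y))) (delta y))"
    proof
      fix x show "f x = badd m k f' (bpow m k (int (nat (f y))) (delta y)) x"
        using fprops fy0 ly by (auto simp: badd_def bpow_def f'_def delta_def)
    qed
    have "psi f = badd m k (psi f') (bpow m k (int (nat (f y))) (psi (delta y)))"
      apply (subst dec)
      apply (subst psi_add[OF f'c])
      using B_pow[OF m_pos delta_carrier[OF ly]] delta_carrier[OF ly]
        monoid.nat_pow_closed[OF group.is_monoid[OF grp]] apply (metis wreath_simps(1))
      using psi_pow[OF delta_carrier[OF ly], of "nat (f y)"] by simp
    then have "psi f z mod p = (psi f' z + (f y * psi (delta y) z) mod int m) mod p"
      using lz fy0 by (simp add: badd_def bpow_def mod_mod_cancel[OF p_dvd])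
    also have "\<dots> = (psi f' z + f y * psi (delta y) z) mod p"
      by (rule mod_add_mod_dvd[OF p_dvd])
    also have "\<dots> = (psi f' z mod p + f y * psi (delta y) z) mod p" by (simp add: mod_add_left_eq)
    also have "\<dots> = ((\<Sum>y\<in>S. f' y * psi (delta y) z) mod p + f y * psi (delta y) z) mod p"
      using IH by simp
    also have "\<dots> = ((\<Sum>y\<in>S. f y * psi (delta y) z) + f y * psi (delta y) z) mod p"
    proof -
      have "(\<Sum>y\<in>S. f' y * psi (delta y) z) = (\<Sum>y\<in>S. f y * psi (delta y) z)"
        using insert.hyps(2) by (intro sum.cong) (auto simp: f'_def)
      then show ?thesis by (simp add: mod_add_left_eq)
    qed
    also have "\<dots> = (\<Sum>y\<in>insert y S. f y * psi (delta y) z) mod p"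
      using insert.hyps by (simp add: add.commute)
    finally show "psi f z mod p = (\<Sum>y\<in>insert y S. f y * psi (delta y) z) mod p" .
  qed
qed

lemma lincomb:
  assumes fc: "(f, zk k) \<in> wr_carrier m k" and lz: "length z = k"
  shows "psi f z mod p = (\<Sum>y\<in>{x. f x \<noteq> 0}. f y * u0 (vsub z (mu y))) mod p"
proof -
  have fin: "finite {x. f x \<noteq> 0}" using fc by (simp add: in_wr_carrier)
  have "psi f z mod p = (\<Sum>y\<in>{x. f x \<noteq> 0}. f y * psi (delta y) z) mod p"
    using lincomb_aux[OF fin] fc lz by blast
  also have "(\<Sum>y\<in>{x. f x \<noteq> 0}. f y * psi (delta y) z) = (\<Sum>y\<in>{x. f x \<noteq> 0}. f y * u0 (vsub z (mu y)))"
  proof (rule sum.cong)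
    fix y assume "y \<in> {x. f x \<noteq> 0}"
    then have "length y = k" using fc by (auto simp: in_wr_carrier)
    then show "f y * psi (delta y) z = f y * u0 (vsub z (mu y))"
      using psi_delta lz by (simp add: tau_def)
  qed simp
  finally show ?thesis .
qed

lemma u0_carrier: "(u0, zk k) \<in> wr_carrier m k"
  unfolding u0_def using psi_carrier[OF delta_carrier] by simp

lemma unit_monomial:
  "\<exists>w. length w = k \<and> (\<forall>x. length x = k \<longrightarrow> (p dvd u0 x \<longleftrightarrow> x \<noteq> w))"
proof -
  interpret I: wraut m k "inv_into (wr_carrier m k) \<phi>" by (rule inv_wraut)
  define u' where "u' = I.psi (delta (zk k))"
  have u'c: "(u', zk k) \<in> wr_carrier m k" unfolding u'_def using I.psi_carrier[OF delta_carrier] by simp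
  have "inv_into (wr_carrier m k) \<phi> (delta (zk k), zk k) = (u', zk k)"
    unfolding u'_def using I.phi_B[OF delta_carrier] by simp
  moreover have "(delta (zk k), zk k) \<in> \<phi> ` wr_carrier m k" using phi_surj delta_carrier by simp
  ultimately have "\<phi> (u', zk k) = (delta (zk k), zk k)" by (metis f_inv_into_f)
  then have pu': "psi u' = delta (zk k)" using phi_B[OF u'c] by simp
  have S: "finite {x. u' x \<noteq> 0}" "{x. u' x \<noteq> 0} \<subseteq> Xs k" using u'c by (auto simp: in_wr_carrier)
  have H: "\<And>z. length z = k \<Longrightarrow> (if z = zk k then 1 else 0) mod p =
      (\<Sum>y\<in>{x. u' x \<noteq> 0}. u' y * u0 (vsub z (mu y))) mod p"
    using lincomb[OF u'c] pu' by (simp add: delta_def)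
  have finb: "finite {x. u0 x \<noteq> 0}" using u0_carrier by (simp add: in_wr_carrier)
  show ?thesis
    by (rule top_term[OF p_prime S mu_inj mu_len finb H])
qed

end


lemma odd_poly_root:
  fixes q :: "real poly"
  assumes od: "odd (degree q)" and lc: "lead_coeff q > 0"
  shows "\<exists>x. poly q x = 0"
proof -
  obtain n1 where n1: "\<forall>x\<ge>n1. poly q x \<ge> lead_coeff q" using poly_pinfty_gt_lc[OF lc] by blast
  define q' where "q' = - pcompose q [:0, -1:]"
  have dq: "degree q > 0" using od by (cases "degree q") auto
  have "lead_coeff (pcompose q [:0, -1:]) = lead_coeff q * (-1) ^ degree q"
    using lead_coeff_comp[of "[:0, -1:]" q] by simp
  then have "lead_coeff (pcompose q [:0, -1:]) = - lead_coeff q" using od by simp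
  then have lq': "lead_coeff q' = lead_coeff q" by (simp add: q'_def)
  obtain n2 where n2: "\<forall>x\<ge>n2. poly q' x \<ge> lead_coeff q'" using poly_pinfty_gt_lc[of q'] lq' lc by auto
  define b where "b = max n1 (max n2 0) + 1"
  have pb: "poly q b > 0" using n1 lc by (smt (verit) b_def)
  have "poly q' b > 0" using n2 lc lq' by (smt (verit) b_def)
  then have pa: "poly q (- b) < 0" by (simp add: q'_def poly_pcompose)
  have "- b < b" by (simp add: b_def)
  then show ?thesis using poly_IVT_pos[OF _ pa pb] by blast
qed

definition ev :: "nat \<Rightarrow> nat \<Rightarrow> int list" where "ev k j = (replicate k 0)[j := 1]"

lemma length_ev[simp]: "length (ev k j) = k" by (simp add: ev_def)
lemma nth_ev: "l < k \<Longrightarrow> ev k j ! l = (if l = j then 1 else 0)"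
  by (simp add: ev_def nth_list_update)

lemma smult_one_mat_vec: "(v :: 'a :: comm_ring_1 vec) \<in> carrier_vec n \<Longrightarrow> (c \<cdot>\<^sub>m 1\<^sub>m n) *\<^sub>v v = c \<cdot>\<^sub>v v"
proof -
  assume v: "v \<in> carrier_vec n"
  have "c \<cdot>\<^sub>v v = c \<cdot>\<^sub>v (1\<^sub>m n *\<^sub>v v)" using v by simp
  also have "\<dots> = (c \<cdot>\<^sub>m 1\<^sub>m n) *\<^sub>v v" using v by auto
  finally show ?thesis by simp
qed

lemma mat_vec_zero: "(A :: 'a :: comm_ring_1 mat) \<in> carrier_mat nr n \<Longrightarrow> A *\<^sub>v 0\<^sub>v n = 0\<^sub>v nr"
  by (intro eq_vecI) auto

definition vdot :: "int list \<Rightarrow> int list \<Rightarrow> int" where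
  "vdot r v = (\<Sum>i<length r. r ! i * v ! i)"

locale addmap =
  fixes k :: nat and L :: "int list \<Rightarrow> int list"
  assumes am_len: "length v = k \<Longrightarrow> length (L v) = k"
    and am_add: "length v = k \<Longrightarrow> length w = k \<Longrightarrow> L (vadd v w) = vadd (L v) (L w)"
begin

lemma am_zero: "L (zk k) = zk k"
proof -
  have "L (zk k) = vadd (L (zk k)) (L (zk k))" using am_add[of "zk k" "zk k"] by simp
  moreover have "length (L (zk k)) = k" by (simp add: am_len)
  ultimately show ?thesis by (metis vadd_vneg vadd_assoc length_vneg vadd_zero2)
qed

definition pv :: "nat \<Rightarrow> int list \<Rightarrow> int list" where "pv i v = take i v @ replicate (k - i) 0"

lemma pv_len: "length v = k \<Longrightarrow> i \<le> k \<Longrightarrow> length (pv i v) = k"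
  by (simp add: pv_def)

lemma am_smul_nat: "length v = k \<Longrightarrow> L (smul (int n) v) = smul (int n) (L v)"
proof (induction n)
  case 0
  have "smul 0 v = zk k" using 0 by (intro list_eqI2) auto
  moreover have "smul 0 (L v) = zk k" using 0 am_len by (intro list_eqI2) auto
  ultimately show ?case using am_zero by simp
next
  case (Suc n)
  have "smul (int (Suc n)) v = vadd (smul (int n) v) v" using Suc.prems
    by (intro list_eqI2) (auto simp: algebra_simps)
  moreover have "smul (int (Suc n)) (L v) = vadd (smul (int n) (L v)) (L v)" using Suc.prems am_len
    by (intro list_eqI2) (auto simp: algebra_simps)
  ultimately show ?case using Suc am_add by simp
qed

lemma am_vneg: "length v = k \<Longrightarrow> L (vneg v) = vneg (L v)"
proof -
  assume lv: "length v = k"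
  have "vadd (L v) (L (vneg v)) = zk k" using am_add[of v "vneg v"] lv am_zero by simp
  then have "vadd (vneg (L v)) (vadd (L v) (L (vneg v))) = vneg (L v)"
    using lv am_len by simp
  then show ?thesis using lv am_len
    by (metis vadd_assoc length_vneg vadd_vneg2 vadd_zero3)
qed

lemma am_smul: "length v = k \<Longrightarrow> L (smul c v) = smul c (L v)"
proof (cases "c \<ge> 0")
  case True
  assume lv: "length v = k"
  then show ?thesis using am_smul_nat[OF lv, of "nat c"] True by simp
next
  case False
  assume lv: "length v = k"
  have "smul c v = vneg (smul (int (nat (- c))) v)" using False by (intro list_eqI2) auto
  moreover have "smul c (L v) = vneg (smul (int (nat (- c))) (L v))" using False by (intro list_eqI2) auto
  moreover have "int (nat (- c)) = - c" using False by simp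
  ultimately show ?thesis using am_vneg am_smul_nat[OF lv, of "nat (- c)"] lv by simp
qed

lemma am_vsub: "length v = k \<Longrightarrow> length w = k \<Longrightarrow> L (vsub v w) = vsub (L v) (L w)"
proof -
  assume lv: "length v = k" and lw: "length w = k"
  have "L v = vadd (L (vsub v w)) (L w)" using am_add[of "vsub v w" w] lv lw by simp
  then show ?thesis using lv lw am_len by (metis length_vsub min.idem vsub_vadd)
qed

lemma pv_Suc: "length v = k \<Longrightarrow> i < k \<Longrightarrow> pv (Suc i) v = vadd (pv i v) (smul (v ! i) (ev k i))"
  by (rule list_eqI2) (auto simp: pv_def nth_append nth_ev min_def take_Suc_conv_app_nth)

lemma pv_entries: "length v = k \<Longrightarrow> i \<le> k \<Longrightarrow> r < k \<Longrightarrow>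
   L (pv i v) ! r = (\<Sum>j<i. L (ev k j) ! r * v ! j)"
proof (induction i)
  case 0
  have "pv 0 v = zk k" by (simp add: pv_def)
  then show ?case using am_zero 0 by simp
next
  case (Suc i)
  have "L (pv (Suc i) v) = vadd (L (pv i v)) (smul (v ! i) (L (ev k i)))"
    using pv_Suc[OF Suc.prems(1)] Suc.prems am_add pv_len am_smul by simp
  then show ?case using Suc am_len pv_len by (simp add: algebra_simps)
qed

definition matL :: "int mat" where "matL = mat k k (\<lambda>(i, j). L (ev k j) ! i)"

lemma matL_dims[simp]: "dim_row matL = k" "dim_col matL = k" by (simp_all add: matL_def)

lemma matL_carrier[simp]: "matL \<in> carrier_mat k k" unfolding matL_def by (rule mat_carrier)

lemma vec_carrier[simp]: "length v = k \<Longrightarrow> vec_of_list v \<in> carrier_vec k"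
  by (rule carrier_vecI) simp

lemma matL_vec: "length v = k \<Longrightarrow> matL *\<^sub>v vec_of_list v = vec_of_list (L v)"
proof (rule eq_vecI)
  assume lv: "length v = k"
  show "dim_vec (matL *\<^sub>v vec_of_list v) = dim_vec (vec_of_list (L v))"
    using lv am_len by (simp add: matL_def)
  fix r assume "r < dim_vec (vec_of_list (L v))"
  then have r: "r < k" using lv am_len by simp
  have "pv k v = v" using lv by (simp add: pv_def)
  then have e1: "L v ! r = (\<Sum>j<k. L (ev k j) ! r * v ! j)" using pv_entries[OF lv _ r, of k] by simp
  have "(matL *\<^sub>v vec_of_list v) $ r = row matL r \<bullet> vec_of_list v"
    using r by (simp add: matL_def)
  also have "\<dots> = (\<Sum>j\<in>{0..<k}. row matL r $ j * vec_of_list v $ j)"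
    unfolding scalar_prod_def using lv by simp
  also have "\<dots> = (\<Sum>j<k. L (ev k j) ! r * v ! j)"
    unfolding atLeast0LessThan
    by (rule sum.cong) (auto simp: matL_def r vec_of_list_index)
  finally show "(matL *\<^sub>v vec_of_list v) $ r = vec_of_list (L v) $ r"
    using e1 by (simp add: vec_of_list_index)
qed

definition Dm :: "int mat" where "Dm = 1\<^sub>m k - matL"

lemma Dm_carrier[simp]: "Dm \<in> carrier_mat k k" unfolding Dm_def by (rule minus_carrier_mat[OF matL_carrier])

lemma Dm_vec: "length v = k \<Longrightarrow> Dm *\<^sub>v vec_of_list v = vec_of_list (vsub v (L v))"
proof -
  assume lv: "length v = k"
  have "Dm *\<^sub>v vec_of_list v = vec_of_list v - vec_of_list (L v)"
    unfolding Dm_def using minus_mult_distrib_mat_vec[OF one_carrier_mat matL_carrier vec_carrier[OF lv]] lv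
    by (simp add: matL_vec)
  also have "\<dots> = vec_of_list (vsub v (L v))" using lv am_len
    by (intro eq_vecI) (auto simp: vec_of_list_index)
  finally show ?thesis .
qed

lemma LA1:
  assumes "det Dm = 0"
  shows "\<exists>r. length r = k \<and> r \<noteq> zk k \<and> (\<forall>v. length v = k \<longrightarrow> vdot r (vsub v (L v)) = 0)"
proof -
  have "det (transpose_mat Dm) = 0" using assms det_transpose[OF Dm_carrier] by simp
  then obtain x where x: "x \<in> carrier_vec k" "x \<noteq> 0\<^sub>v k" "transpose_mat Dm *\<^sub>v x = 0\<^sub>v k"
    using det_0_iff_vec_prod_zero[of "transpose_mat Dm" k] by auto
  define r where "r = list_of_vec x"
  have lr: "length r = k" using x by (simp add: r_def)
  have "r \<noteq> zk k"
  proof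
    assume "r = zk k"
    then have "vec_of_list r = 0\<^sub>v k" by (intro eq_vecI) (auto simp: vec_of_list_index)
    then show False using x by (simp add: r_def vec_list)
  qed
  moreover have "\<forall>v. length v = k \<longrightarrow> vdot r (vsub v (L v)) = 0"
  proof (intro allI impI)
    fix v :: "int list" assume lv: "length v = k"
    have "scalar_prod x (Dm *\<^sub>v vec_of_list v) = scalar_prod (transpose_mat Dm *\<^sub>v x) (vec_of_list v)"
      using transpose_vec_mult_scalar[OF Dm_carrier _ x(1), of "vec_of_list v"] lv by simp
    also have "\<dots> = 0" using x lv by simp
    finally have "scalar_prod x (vec_of_list (vsub v (L v))) = 0" using Dm_vec lv by simp
    then show "vdot r (vsub v (L v)) = 0" using x lv am_len lr
      by (simp add: vdot_def scalar_prod_def r_def vec_of_list_index atLeast0LessThan)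
  qed
  ultimately show ?thesis using lr by blast
qed

lemma LA2a:
  assumes D: "det Dm \<noteq> 0" and lv: "length v = k" and fx: "L v = v"
  shows "v = zk k"
proof -
  have "Dm *\<^sub>v vec_of_list v = 0\<^sub>v k"
    using Dm_vec[OF lv] fx lv by (intro eq_vecI) (auto simp: vec_of_list_index)
  then have "(adj_mat Dm * Dm) *\<^sub>v vec_of_list v = 0\<^sub>v k"
    using assoc_mult_mat_vec[OF adj_mat(1)[OF Dm_carrier] Dm_carrier vec_carrier[OF lv]]
      mat_vec_zero[OF adj_mat(1)[OF Dm_carrier]] by simp
  then have "(det Dm \<cdot>\<^sub>m 1\<^sub>m k) *\<^sub>v vec_of_list v = 0\<^sub>v k" using adj_mat(3)[OF Dm_carrier] by simp
  then have "det Dm \<cdot>\<^sub>v vec_of_list v = 0\<^sub>v k" using lv smult_one_mat_vec[OF vec_carrier[OF lv]] by simp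
  then have "\<forall>i<k. det Dm * v ! i = 0"
  proof (intro allI impI)
    fix i assume i: "i < k"
    assume e: "det Dm \<cdot>\<^sub>v vec_of_list v = 0\<^sub>v k"
    have "(det Dm \<cdot>\<^sub>v vec_of_list v) $ i = 0\<^sub>v k $ i" using e by simp
    then show "det Dm * v ! i = 0" using i lv by (simp add: vec_of_list_index)
  qed
  then show ?thesis using D lv by (intro list_eqI2) auto
qed

lemma LA2b:
  assumes ly: "length y = k"
  shows "\<exists>x. length x = k \<and> vsub x (L x) = smul (det Dm) y"
proof -
  define xv where "xv = adj_mat Dm *\<^sub>v vec_of_list y"
  have xvc: "xv \<in> carrier_vec k" using adj_mat(1)[OF Dm_carrier] ly by (simp add: xv_def)
  define x where "x = list_of_vec xv"
  have lx: "length x = k" using xvc by (simp add: x_def)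
  have "Dm *\<^sub>v xv = (Dm * adj_mat Dm) *\<^sub>v vec_of_list y"
    using assoc_mult_mat_vec[OF Dm_carrier adj_mat(1)[OF Dm_carrier] vec_carrier[OF ly]] by (simp add: xv_def)
  also have "\<dots> = det Dm \<cdot>\<^sub>v vec_of_list y" using adj_mat(2)[OF Dm_carrier] ly
      smult_one_mat_vec[OF vec_carrier[OF ly]] by simp
  finally have "vec_of_list (vsub x (L x)) = det Dm \<cdot>\<^sub>v vec_of_list y"
    using Dm_vec[OF lx] by (simp add: x_def vec_list)
  then have "list_of_vec (vec_of_list (vsub x (L x))) = list_of_vec (det Dm \<cdot>\<^sub>v vec_of_list y)" by simp
  then have e: "vsub x (L x) = list_of_vec (det Dm \<cdot>\<^sub>v vec_of_list y)" by (simp add: list_vec)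
  have "list_of_vec (det Dm \<cdot>\<^sub>v vec_of_list y) = smul (det Dm) y"
    using ly by (intro list_eqI2) (auto simp: list_of_vec_index vec_of_list_index)
  then have "vsub x (L x) = smul (det Dm) y" using e by simp
  then show ?thesis using lx by blast
qed


lemma matL_pow_vec: "length v = k \<Longrightarrow> (\<forall>w. length w = k \<longrightarrow> length ((L ^^ N) w) = k) \<Longrightarrow>
    matL ^\<^sub>m N *\<^sub>v vec_of_list v = vec_of_list ((L ^^ N) v)"
proof (induction N arbitrary: v)
  case 0
  then show ?case by simp
next
  case (Suc N)
  have lLv: "length (L v) = k" using am_len Suc.prems by simp
  have "matL ^\<^sub>m Suc N *\<^sub>v vec_of_list v = (matL ^\<^sub>m N * matL) *\<^sub>v vec_of_list v" by simp
  also have "\<dots> = matL ^\<^sub>m N *\<^sub>v (matL *\<^sub>v vec_of_list v)"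
    using assoc_mult_mat_vec[OF pow_carrier_mat[OF matL_carrier] matL_carrier vec_carrier[OF Suc.prems(1)]] by simp
  also have "\<dots> = matL ^\<^sub>m N *\<^sub>v vec_of_list (L v)" using matL_vec Suc.prems by simp
  also have "\<dots> = vec_of_list ((L ^^ N) (L v))"
  proof -
    have "\<forall>w. length w = k \<longrightarrow> length ((L ^^ N) w) = k"
    proof (intro allI impI)
      fix w :: "int list" assume "length w = k"
      then show "length ((L ^^ N) w) = k" by (induction N) (auto simp: am_len)
    qed
    then show ?thesis using Suc.IH[OF lLv] by simp
  qed
  also have "\<dots> = vec_of_list ((L ^^ Suc N) v)" by (simp only: funpow_Suc_right o_apply)
  finally show ?case .
qed

lemma funpow_len: "length w = k \<Longrightarrow> length ((L ^^ N) w) = k"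
  by (induction N) (auto simp: am_len)

lemma mat_vec_ev: "A \<in> carrier_mat k k \<Longrightarrow> i < k \<Longrightarrow> j < k \<Longrightarrow> (A *\<^sub>v vec_of_list (ev k j)) $ i = A $$ (i, j)"
proof -
  assume A: "A \<in> carrier_mat k k" and i: "i < k" and j: "j < k"
  have "(A *\<^sub>v vec_of_list (ev k j)) $ i = (\<Sum>l\<in>{0..<k}. row A i $ l * vec_of_list (ev k j) $ l)"
    using A i by (simp add: scalar_prod_def)
  also have "\<dots> = (\<Sum>l\<in>{0..<k}. if l = j then A $$ (i, l) else 0)"
    by (rule sum.cong) (use A i in \<open>auto simp: vec_of_list_index nth_ev\<close>)
  also have "\<dots> = A $$ (i, j)" using j by simp
  finally show ?thesis .
qed

lemma LA3:
  assumes ok: "odd k" and D: "det Dm \<noteq> 0" and oN: "odd N"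
    and fx: "\<forall>v. length v = k \<longrightarrow> (L ^^ N) v = v"
  shows False
proof -
  have pw: "matL ^\<^sub>m N = 1\<^sub>m k"
  proof (rule eq_matI)
    fix i j assume i: "i < dim_row (1\<^sub>m k)" and j: "j < dim_col (1\<^sub>m k)"
    have "(matL ^\<^sub>m N) $$ (i, j) = (matL ^\<^sub>m N *\<^sub>v vec_of_list (ev k j)) $ i"
      using mat_vec_ev[OF pow_carrier_mat[OF matL_carrier]] i j by simp
    also have "\<dots> = vec_of_list (ev k j) $ i"
      using matL_pow_vec[of "ev k j" N] funpow_len fx by simp
    also have "\<dots> = 1\<^sub>m k $$ (i, j)" using i j by (simp add: vec_of_list_index nth_ev)
    finally show "(matL ^\<^sub>m N) $$ (i, j) = 1\<^sub>m k $$ (i, j)" .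
  qed auto
  define R :: "real mat" where "R = map_mat real_of_int matL"
  have Rc: "R \<in> carrier_mat k k" by (simp add: R_def)
  have RN: "R ^\<^sub>m N = 1\<^sub>m k"
  proof -
    have "map_mat real_of_int (1\<^sub>m k) = 1\<^sub>m k" by (rule eq_matI) auto
    moreover have "map_mat real_of_int (matL ^\<^sub>m N) = (map_mat real_of_int matL) ^\<^sub>m N"
      by (rule of_int_hom.mat_hom_pow[OF matL_carrier])
    ultimately show ?thesis unfolding R_def using pw by simp
  qed
  have dc: "degree (char_poly R) = k \<and> coeff (char_poly R) k = 1" by (rule degree_monic_char_poly[OF Rc])
  then obtain lam where "poly (char_poly R) lam = 0" using odd_poly_root[of "char_poly R"] ok by auto
  then have "eigenvalue R lam" using eigenvalue_root_char_poly[OF Rc] by simp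
  then obtain v where ev: "eigenvector R v lam" by (auto simp: eigenvalue_def)
  have vc: "v \<in> carrier_vec k" and v0: "v \<noteq> 0\<^sub>v k" and Rv: "R *\<^sub>v v = lam \<cdot>\<^sub>v v"
    using ev Rc by (auto simp: eigenvector_def)
  have "R ^\<^sub>m N *\<^sub>v v = lam ^ N \<cdot>\<^sub>v v" by (rule eigenvector_pow[OF Rc ev])
  then have vv: "v = lam ^ N \<cdot>\<^sub>v v" using RN vc by simp
  have "\<exists>i<k. v $ i \<noteq> 0"
  proof (rule ccontr)
    assume "\<not> (\<exists>i<k. v $ i \<noteq> 0)"
    then have "v = 0\<^sub>v k" using vc by (intro eq_vecI) auto
    then show False using v0 by simp
  qed
  then obtain i where i: "i < k" "v $ i \<noteq> 0" by blast
  have "v $ i = lam ^ N * v $ i" using arg_cong[OF vv, of "\<lambda>w. w $ i"] i vc by simp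
  then have lN: "lam ^ N = 1" using i by simp
  have lam1: "lam = 1"
  proof (rule ccontr)
    assume "lam \<noteq> 1"
    have aN: "\<bar>lam\<bar> ^ N = 1" using lN by (simp add: power_abs[symmetric])
    have Np: "N > 0" using oN by (cases N) auto
    have "\<bar>lam\<bar> = 1"
    proof (rule ccontr)
      assume ne: "\<bar>lam\<bar> \<noteq> 1"
      show False
      proof (cases "\<bar>lam\<bar> < 1")
        case True
        then have "\<bar>lam\<bar> ^ N < 1 ^ N" using power_strict_mono[of "\<bar>lam\<bar>" 1 N] Np by simp
        then show False using aN by simp
      next
        case False
        then have "1 < \<bar>lam\<bar>" using ne by simp
        then have "1 ^ N < \<bar>lam\<bar> ^ N" using power_strict_mono[of 1 "\<bar>lam\<bar>" N] Np by simp
        then show False using aN by simp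
      qed
    qed
    then have "lam = -1" using \<open>lam \<noteq> 1\<close> by auto
    then show False using lN oN by simp
  qed
  have "(1\<^sub>m k - R) *\<^sub>v v = 0\<^sub>v k"
  proof -
    have "(1\<^sub>m k - R) *\<^sub>v v = 1\<^sub>m k *\<^sub>v v - R *\<^sub>v v"
      by (rule minus_mult_distrib_mat_vec[OF one_carrier_mat Rc vc])
    also have "\<dots> = v - v" using Rv lam1 vc by simp
    also have "\<dots> = 0\<^sub>v k" using vc by simp
    finally show ?thesis .
  qed
  then have "det (1\<^sub>m k - R) = 0"
    using det_0_iff_vec_prod_zero[of "1\<^sub>m k - R" k] vc v0 minus_carrier_mat[OF Rc] by blast
  moreover have "1\<^sub>m k - R = map_mat real_of_int Dm"
    unfolding R_def Dm_def by (rule eq_matI) auto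
  ultimately have "real_of_int (det Dm) = 0" using of_int_hom.hom_det by metis
  then show False using D by simp
qed

end


section \<open>Integer powers of a bijection of Z^k\<close>

locale bijX =
  fixes k :: nat and A Ainv :: "int list \<Rightarrow> int list"
  assumes A_len: "length x = k \<Longrightarrow> length (A x) = k"
    and Ainv_len: "length x = k \<Longrightarrow> length (Ainv x) = k"
    and A_Ainv: "length x = k \<Longrightarrow> A (Ainv x) = x"
    and Ainv_A: "length x = k \<Longrightarrow> Ainv (A x) = x"
begin

definition apow :: "int \<Rightarrow> int list \<Rightarrow> int list" where
  "apow j x = (if 0 \<le> j then (A ^^ nat j) x else (Ainv ^^ nat (- j)) x)"

lemma Apow_len: "length x = k \<Longrightarrow> length ((A ^^ n) x) = k"
  by (induction n) (auto simp: A_len)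
lemma Ainvpow_len: "length x = k \<Longrightarrow> length ((Ainv ^^ n) x) = k"
  by (induction n) (auto simp: Ainv_len)

lemma apow_len: "length x = k \<Longrightarrow> length (apow j x) = k"
  by (simp add: apow_def Apow_len Ainvpow_len)

lemma apow_0[simp]: "apow 0 x = x" by (simp add: apow_def)

lemma apow_succ: "length x = k \<Longrightarrow> apow (j + 1) x = A (apow j x)"
proof (cases "0 \<le> j")
  case True
  then have "nat (j + 1) = Suc (nat j)" by simp
  then show ?thesis using True by (simp add: apow_def)
next
  case False
  assume lx: "length x = k"
  show ?thesis
  proof (cases "j = -1")
    case True
    then show ?thesis using lx by (simp add: apow_def A_Ainv)
  next
    case False
    with \<open>\<not> 0 \<le> j\<close> have "nat (- j) = Suc (nat (- (j + 1)))" "\<not> 0 \<le> j + 1" by auto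
    then show ?thesis using \<open>\<not> 0 \<le> j\<close> lx by (simp add: apow_def A_Ainv Ainvpow_len)
  qed
qed

lemma apow_pred: "length x = k \<Longrightarrow> apow (j - 1) x = Ainv (apow j x)"
  using apow_succ[of x "j - 1"] Ainv_A apow_len by simp

lemma apow_add: "length x = k \<Longrightarrow> apow (i + j) x = apow i (apow j x)"
proof (induction i rule: int_induct[where k = 0])
  case base
  then show ?case by simp
next
  case (step1 i)
  have "apow (i + 1 + j) x = apow ((i + j) + 1) x" by (simp add: algebra_simps)
  also have "\<dots> = A (apow (i + j) x)" using apow_succ step1 by simp
  also have "\<dots> = A (apow i (apow j x))" using step1 by simp
  also have "\<dots> = apow (i + 1) (apow j x)" using apow_succ apow_len step1 by simp
  finally show ?case .
next
  case (step2 i)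
  have "apow (i - 1 + j) x = apow ((i + j) - 1) x" by (simp add: algebra_simps)
  also have "\<dots> = Ainv (apow (i + j) x)" using apow_pred step2 by simp
  also have "\<dots> = Ainv (apow i (apow j x))" using step2 by simp
  also have "\<dots> = apow (i - 1) (apow j x)" using apow_pred apow_len step2 by simp
  finally show ?case .
qed

lemma apow_periodic:
  assumes lx: "length x = k" and e: "apow j x = x"
  shows "(A ^^ nat \<bar>j\<bar>) x = x"
proof (cases "0 \<le> j")
  case True
  then show ?thesis using e by (simp add: apow_def)
next
  case False
  then have "apow (- j) (apow j x) = x" using apow_add[OF lx, of "- j" j] by simp
  then have "apow (- j) x = x" using e by simp
  then show ?thesis using False by (simp add: apow_def)
qed

lemma apow_inv_eq:
  assumes lx: "length x = k" and e: "apow i x = apow j x"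
  shows "apow (i - j) x = x"
proof -
  have "apow (i - j) x = apow (- j) (apow i x)" using apow_add[OF lx, of "- j" i] by (simp add: algebra_simps)
  also have "\<dots> = apow (- j) (apow j x)" using e by simp
  also have "\<dots> = x" using apow_add[OF lx, of "- j" j] by simp
  finally show ?thesis .
qed

lemma invariant_apow:
  assumes inv: "\<And>y. length y = k \<Longrightarrow> \<gamma> (A y) = \<gamma> y" and lx: "length x = k"
  shows "\<gamma> (apow j x) = \<gamma> x"
proof (induction j rule: int_induct[where k = 0])
  case base
  then show ?case by simp
next
  case (step1 i)
  then show ?case using apow_succ[OF lx] inv apow_len[OF lx] by simp
next
  case (step2 i)
  have "\<gamma> (apow i x) = \<gamma> (A (apow (i - 1) x))" using apow_succ[OF lx, of "i - 1"] by simp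
  also have "\<dots> = \<gamma> (apow (i - 1) x)" using inv apow_len[OF lx] by simp
  finally show ?case using step2 by simp
qed

end

section \<open>Content of an integer vector\<close>

definition vcontent :: "int list \<Rightarrow> int" where "vcontent y = Gcd (set y)"

lemma vcontent_nonneg: "vcontent y \<ge> 0" by (simp add: vcontent_def)

lemma vcontent_dvd: "i < length y \<Longrightarrow> vcontent y dvd y ! i"
  by (simp add: vcontent_def Gcd_dvd)

lemma vcontent_smul: "vcontent (smul c y) = \<bar>c\<bar> * vcontent y"
proof -
  have "set (smul c y) = (*) c ` set y" by (simp add: smul_def)
  then show ?thesis by (simp add: vcontent_def Gcd_mult abs_mult)
qed

lemma vcontent_zero_iff: "vcontent y = 0 \<longleftrightarrow> (\<forall>i<length y. y ! i = 0)"
proof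
  assume "vcontent y = 0"
  then have "set y \<subseteq> {0}" by (simp add: vcontent_def)
  then show "\<forall>i<length y. y ! i = 0" using nth_mem by blast
next
  assume "\<forall>i<length y. y ! i = 0"
  then have "set y \<subseteq> {0}" by (auto simp: in_set_conv_nth)
  then show "vcontent y = 0" by (simp add: vcontent_def)
qed

lemma vcontent_factor: "\<exists>z. length z = length y \<and> y = smul (vcontent y) z"
proof -
  define z where "z = map (\<lambda>a. a div vcontent y) y"
  have "y = smul (vcontent y) z"
  proof (rule list_eqI2)
    show "length y = length (smul (vcontent y) z)" by (simp add: z_def)
    fix i assume i: "i < length y"
    have "vcontent y dvd y ! i" using vcontent_dvd[OF i] .
    then show "y ! i = smul (vcontent y) z ! i" using i by (simp add: z_def)
  qed
  then show ?thesis by (intro exI[of _ z]) (simp add: z_def)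
qed

lemma (in addmap) vcontent_dvd_image:
  assumes ly: "length y = k"
  shows "vcontent y dvd vcontent (L y)"
proof -
  obtain z where z: "length z = k" "y = smul (vcontent y) z" using vcontent_factor ly by metis
  have "L y = L (smul (vcontent y) z)" using z(2) by (rule arg_cong)
  then have "L y = smul (vcontent y) (L z)" using am_smul[OF z(1)] by simp
  then have "\<forall>a\<in>set (L y). vcontent y dvd a"
    using am_len[OF z(1)] by (auto simp: in_set_conv_nth)
  then show ?thesis unfolding vcontent_def[of "L y"] by (simp add: Gcd_greatest)
qed


lemma inf_classes:
  assumes G: "group G" and hom: "\<phi> \<in> hom G G"
    and b: "\<And>t::nat. b t \<in> carrier G"
    and nc: "\<And>s t. s \<noteq> t \<Longrightarrow> \<not> twisted_conj G \<phi> (b s) (b t)"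
  shows "infinite (reidemeister_classes G \<phi>)"
proof -
  interpret group G by (rule G)
  define R where "R = {(g1, g2). g1 \<in> carrier G \<and> g2 \<in> carrier G \<and> twisted_conj G \<phi> g1 g2}"
  have refl: "twisted_conj G \<phi> x x" if x: "x \<in> carrier G" for x
  proof -
    have "\<phi> \<one>\<^bsub>G\<^esub> = \<one>\<^bsub>G\<^esub>" using hom G by (simp add: hom_one)
    then have "\<one>\<^bsub>G\<^esub> \<otimes>\<^bsub>G\<^esub> x \<otimes>\<^bsub>G\<^esub> \<phi> (inv\<^bsub>G\<^esub> \<one>\<^bsub>G\<^esub>) = x" using x by simp
    then show ?thesis unfolding twisted_conj_def using one_closed by (metis (no_types))
  qed
  define cl where "cl t = R `` {b t}" for t
  have incl: "cl t \<in> reidemeister_classes G \<phi>" for t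
    unfolding cl_def reidemeister_classes_def R_def[symmetric] using b by (intro quotientI)
  have "inj cl"
  proof (rule injI)
    fix s t assume e: "cl s = cl t"
    have "b t \<in> cl t" using refl b by (simp add: cl_def R_def)
    then have "b t \<in> cl s" using e by simp
    then have "twisted_conj G \<phi> (b s) (b t)" by (simp add: cl_def R_def)
    then show "s = t" using nc by blast
  qed
  then have "infinite (range cl)" by (simp add: finite_image_iff)
  moreover have "range cl \<subseteq> reidemeister_classes G \<phi>" using incl by auto
  ultimately show ?thesis using finite_subset by blast
qed

lemma dvd_prod_helper:
  fixes p a a' b b' s e :: int
  assumes "p dvd (a' - s * a)" "p dvd (b' - e * b)" "p dvd (e * s - 1)"
  shows "p dvd (a' * b' - a * b)"
proof -
  have "a' * b' - a * b = (a' - s * a) * b' + s * a * (b' - e * b) + (e * s - 1) * a * b"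
    by (simp add: algebra_simps)
  moreover have "p dvd (a' - s * a) * b'" using assms(1) by (rule dvd_mult2)
  moreover have "p dvd s * a * (b' - e * b)" using assms(2) by (rule dvd_mult)
  moreover have "p dvd (e * s - 1) * a * b" using assms(3) by (simp add: mult.assoc)
  ultimately show ?thesis by (metis dvd_add)
qed

lemma wr_inv_mult:
  assumes a: "(f, v) \<in> wr_carrier m k"
  shows "wr_mult m k (wr_inv m k (f, v)) (f, v) = (\<lambda>x. 0, zk k)"
proof -
  have c: "length v = k" using a by (simp add: in_wr_carrier)
  have e: "(\<lambda>x. if length x = k then ((if length x = k then (- f (vadd x v)) mod int m else 0)
        + f (vsub x (vneg v))) mod int m else 0) = (\<lambda>x. 0)"
  proof
    fix x show "(if length x = k then ((if length x = k then (- f (vadd x v)) mod int m else 0)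
        + f (vsub x (vneg v))) mod int m else 0) = 0"
    proof (cases "length x = k")
      case True
      then have "vsub x (vneg v) = vadd x v" using c
        by (intro list_eqI2) auto
      then show ?thesis using True by (simp add: mod_add_left_eq)
    qed simp
  qed
  show ?thesis unfolding wr_inv_def fst_conv snd_conv wr_mult_eq e using c by simp
qed

context wraut
begin

lemma inv_W: "x \<in> wr_carrier m k \<Longrightarrow> inv\<^bsub>W\<^esub> x = wr_inv m k x"
proof -
  assume x: "x \<in> wr_carrier m k"
  obtain f v where fv: "x = (f, v)" by (cases x)
  interpret group W by (rule grp)
  show ?thesis unfolding fv
    by (rule inv_equality) (use x fv wr_inv_mult wr_inv_closed[OF m_pos] in auto)
qed

lemma snd_wr_inv: "snd (wr_inv m k (f, v)) = vneg v" by (simp add: wr_inv_def)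

lemma wr_inv_B: "wr_inv m k (g, zk k) = ((\<lambda>x. if length x = k then (- g x) mod int m else 0), zk k)"
  by (auto simp: wr_inv_def vneg_def fun_eq_iff)

end

sublocale wraut \<subseteq> MU: addmap k mu
  by unfold_locales (simp_all add: mu_len mu_add)

context wraut
begin

lemma twisted_snd:
  assumes g1: "g1 \<in> wr_carrier m k" and g2: "g2 \<in> wr_carrier m k"
    and tc: "twisted_conj W \<phi> g1 g2"
  shows "\<exists>v. length v = k \<and> snd g1 = vadd (vadd v (snd g2)) (vneg (mu v))
     \<and> (\<exists>h. h \<in> wr_carrier m k \<and> snd h = v \<and> g1 = wr_mult m k (wr_mult m k h g2) (\<phi> (wr_inv m k h)))"
proof -
  interpret group W by (rule grp)
  obtain h where h: "h \<in> wr_carrier m k" and e: "g1 = wr_mult m k (wr_mult m k h g2) (\<phi> (inv\<^bsub>W\<^esub> h))"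
    using tc unfolding twisted_conj_def by auto
  obtain f v where fv: "h = (f, v)" by (cases h)
  have lv: "length v = k" using h fv by (simp add: in_wr_carrier)
  have ih: "inv\<^bsub>W\<^esub> h = wr_inv m k h" using inv_W h by simp
  have ic: "wr_inv m k h \<in> wr_carrier m k" using wr_inv_closed[OF m_pos] h fv by simp
  have "snd (\<phi> (wr_inv m k h)) = mu (vneg v)"
    using snd_phi ic fv snd_wr_inv by (metis prod.collapse)
  then have "snd g1 = vadd (vadd v (snd g2)) (mu (vneg v))"
    using e ih fv by (cases g2, cases "\<phi> (wr_inv m k h)") (simp add: wr_mult_eq)
  then have "snd g1 = vadd (vadd v (snd g2)) (vneg (mu v))" using MU.am_vneg lv by simp
  then show ?thesis using lv h fv e ih by auto
qed

end

definition Lam :: "(int list \<Rightarrow> int) \<Rightarrow> (int list \<Rightarrow> int) \<Rightarrow> int" where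
  "Lam \<chi> f = (\<Sum>y\<in>{y. f y \<noteq> 0}. \<chi> y * f y)"

lemma Lam_superset:
  assumes "finite T" "{y. f y \<noteq> 0} \<subseteq> T"
  shows "Lam \<chi> f = (\<Sum>y\<in>T. \<chi> y * f y)"
  unfolding Lam_def using assms by (intro sum.mono_neutral_left) auto

lemma dvd_sum_diff:
  fixes p :: int
  assumes "finite T" "\<And>y. y \<in> T \<Longrightarrow> p dvd (F y - G y)"
  shows "p dvd (sum F T - sum G T)"
proof -
  have "sum F T - sum G T = (\<Sum>y\<in>T. F y - G y)" by (simp add: sum_subtractf)
  then show ?thesis using assms by (simp add: dvd_sum)
qed

context wrp
begin

lemma supp_fin: "(f, zk k) \<in> wr_carrier m k \<Longrightarrow> finite {y. f y \<noteq> 0}"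
  by (simp add: in_wr_carrier)

lemma supp_len: "(f, zk k) \<in> wr_carrier m k \<Longrightarrow> f y \<noteq> 0 \<Longrightarrow> length y = k"
  by (auto simp: in_wr_carrier)

lemma Lam_badd:
  assumes f: "(f, zk k) \<in> wr_carrier m k" and g: "(g, zk k) \<in> wr_carrier m k"
  shows "p dvd (Lam \<chi> (badd m k f g) - (Lam \<chi> f + Lam \<chi> g))"
proof -
  define T where "T = {y. f y \<noteq> 0} \<union> {y. g y \<noteq> 0} \<union> {y. badd m k f g y \<noteq> 0}"
  have fh: "(badd m k f g, zk k) \<in> wr_carrier m k" by (rule badd_carrier[OF m_pos f g])
  have finT: "finite T" using supp_fin[OF f] supp_fin[OF g] supp_fin[OF fh] by (simp add: T_def)
  have e1: "Lam \<chi> (badd m k f g) = (\<Sum>y\<in>T. \<chi> y * badd m k f g y)" by (rule Lam_superset[OF finT]) (auto simp: T_def)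
  have e2a: "Lam \<chi> f = (\<Sum>y\<in>T. \<chi> y * f y)" by (rule Lam_superset[OF finT]) (auto simp: T_def)
  have e2b: "Lam \<chi> g = (\<Sum>y\<in>T. \<chi> y * g y)" by (rule Lam_superset[OF finT]) (auto simp: T_def)
  have e2: "Lam \<chi> f + Lam \<chi> g = (\<Sum>y\<in>T. \<chi> y * f y + \<chi> y * g y)"
    using e2a e2b by (simp add: sum.distrib)
  have "p dvd ((\<Sum>y\<in>T. \<chi> y * badd m k f g y) - (\<Sum>y\<in>T. \<chi> y * f y + \<chi> y * g y))"
  proof (rule dvd_sum_diff[OF finT])
    fix y assume "y \<in> T"
    show "p dvd (\<chi> y * badd m k f g y - (\<chi> y * f y + \<chi> y * g y))"
    proof (cases "length y = k")
      case True
      have "int m dvd ((f y + g y) mod int m - (f y + g y))" by (subst mod_eq_dvd_iff[symmetric]) simp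
      then have "p dvd ((f y + g y) mod int m - (f y + g y))" using p_dvd dvd_trans by blast
      then have "p dvd \<chi> y * ((f y + g y) mod int m - (f y + g y))" by simp
      then show ?thesis using True by (simp add: badd_def algebra_simps)
    next
      case False
      then have "f y = 0" "g y = 0" using f g by (auto simp: in_wr_carrier)
      then show ?thesis using False by (simp add: badd_def)
    qed
  qed
  then show ?thesis using e1 e2 by simp
qed

lemma Lam_neg:
  assumes g: "(g, zk k) \<in> wr_carrier m k"
  shows "p dvd (Lam \<chi> (\<lambda>x. if length x = k then (- g x) mod int m else 0) + Lam \<chi> g)"
proof -
  define gn where "gn = (\<lambda>x. if length x = k then (- g x) mod int m else 0)"
  have "fst (wr_inv m k (g, zk k)) = gn" by (simp add: wr_inv_B gn_def)
  then have gnc: "(gn, zk k) \<in> wr_carrier m k" using wr_inv_closed[OF m_pos g] wr_inv_B by (simp add: gn_def)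
  define T where "T = {y. g y \<noteq> 0} \<union> {y. gn y \<noteq> 0}"
  have finT: "finite T" using supp_fin[OF g] supp_fin[OF gnc] by (simp add: T_def)
  have e1: "Lam \<chi> gn = (\<Sum>y\<in>T. \<chi> y * gn y)" by (rule Lam_superset[OF finT]) (auto simp: T_def)
  have e2: "Lam \<chi> g = (\<Sum>y\<in>T. \<chi> y * g y)" by (rule Lam_superset[OF finT]) (auto simp: T_def)
  have "p dvd ((\<Sum>y\<in>T. \<chi> y * gn y) - (\<Sum>y\<in>T. - (\<chi> y * g y)))"
  proof (rule dvd_sum_diff[OF finT])
    fix y assume "y \<in> T"
    show "p dvd (\<chi> y * gn y - - (\<chi> y * g y))"
    proof (cases "length y = k")
      case True
      have "int m dvd ((- g y) mod int m - (- g y))" by (subst mod_eq_dvd_iff[symmetric]) simp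
      then have "p dvd ((- g y) mod int m - (- g y))" using p_dvd dvd_trans by blast
      then have "p dvd \<chi> y * ((- g y) mod int m - (- g y))" by simp
      then show ?thesis using True by (simp add: gn_def algebra_simps)
    next
      case False
      then have "g y = 0" using g by (auto simp: in_wr_carrier)
      then show ?thesis using False by (simp add: gn_def)
    qed
  qed
  then show ?thesis using e1 e2 by (simp add: gn_def sum_negf)
qed

end


lemma vdot_vadd: "length a = length r \<Longrightarrow> length b = length r \<Longrightarrow> vdot r (vadd a b) = vdot r a + vdot r b"
  by (simp add: vdot_def algebra_simps sum.distrib)
lemma vdot_vneg: "length a = length r \<Longrightarrow> vdot r (vneg a) = - vdot r a"
  by (simp add: vdot_def sum_negf)
lemma vdot_vsub: "length a = length r \<Longrightarrow> length b = length r \<Longrightarrow> vdot r (vsub a b) = vdot r a - vdot r b"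
  by (simp add: vdot_def algebra_simps sum_subtractf)
lemma vdot_smul_ev: "length r = k \<Longrightarrow> i0 < k \<Longrightarrow> vdot r (smul c (ev k i0)) = c * r ! i0"
proof -
  assume lr: "length r = k" and i0: "i0 < k"
  have "vdot r (smul c (ev k i0)) = (\<Sum>i<k. if i = i0 then c * r ! i0 else 0)"
    unfolding vdot_def lr by (rule sum.cong) (auto simp: nth_ev)
  also have "\<dots> = c * r ! i0" using i0 by simp
  finally show ?thesis .
qed

context wraut
begin

lemma phi_hom: "\<phi> \<in> hom W W" using phi_iso by (simp add: iso_def)

lemma caseD0:
  assumes D: "det MU.Dm = 0"
  shows "infinite (reidemeister_classes W \<phi>)"
proof -
  obtain r where r: "length r = k" "r \<noteq> zk k" "\<forall>v. length v = k \<longrightarrow> vdot r (vsub v (mu v)) = 0"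
    using MU.LA1[OF D] by blast
  have "\<exists>i0<k. r ! i0 \<noteq> 0"
  proof (rule ccontr)
    assume "\<not> (\<exists>i0<k. r ! i0 \<noteq> 0)"
    then have "r = zk k" using r(1) by (intro list_eqI2) auto
    then show False using r(2) by simp
  qed
  then obtain i0 where i0: "i0 < k" "r ! i0 \<noteq> 0" by blast
  define b where "b t = ((\<lambda>x::int list. 0::int), smul (int t) (ev k i0))" for t :: nat
  have bc: "b t \<in> carrier W" for t unfolding b_def using zero_v_carrier by simp
  show ?thesis
  proof (rule inf_classes[OF grp phi_hom bc])
    fix s t :: nat assume st: "s \<noteq> t"
    show "\<not> twisted_conj W \<phi> (b s) (b t)"
    proof
      assume tc: "twisted_conj W \<phi> (b s) (b t)"
      obtain v where v: "length v = k" "snd (b s) = vadd (vadd v (snd (b t))) (vneg (mu v))"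
        using twisted_snd[OF _ _ tc] bc by auto
      have lmv: "length (mu v) = k" using mu_len v(1) by simp
      have "vdot r (snd (b s)) = vdot r v + vdot r (snd (b t)) - vdot r (mu v)"
        using v lmv r(1) by (simp add: b_def vdot_vadd vdot_vneg)
      also have "\<dots> = vdot r (snd (b t)) + vdot r (vsub v (mu v))"
        using v lmv r(1) by (simp add: vdot_vsub)
      also have "\<dots> = vdot r (snd (b t))" using r(3) v(1) by simp
      finally have "int s * r ! i0 = int t * r ! i0"
        using vdot_smul_ev[OF r(1) i0(1)] by (simp add: b_def)
      then show False using i0(2) st by simp
    qed
  qed
qed

end

context wrp
begin

definition wv where "wv = (SOME w. length w = k \<and> (\<forall>x. length x = k \<longrightarrow> (p dvd u0 x \<longleftrightarrow> x \<noteq> w)))"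

lemma wv: "length wv = k" "\<And>x. length x = k \<Longrightarrow> p dvd u0 x \<longleftrightarrow> x \<noteq> wv"
  using someI_ex[OF unit_monomial] unfolding wv_def by blast+

definition eps where "eps = u0 wv"

lemma eps_ndvd: "\<not> p dvd eps" using wv by (simp add: eps_def)

definition Aff where "Aff x = vadd (mu x) wv"
definition muinv where "muinv = inv_into (Xs k) mu"
definition Ainv where "Ainv z = muinv (vsub z wv)"

lemma muinv: "length y = k \<Longrightarrow> length (muinv y) = k \<and> mu (muinv y) = y"
proof -
  assume ly: "length y = k"
  then have "y \<in> mu ` Xs k" using mu_surj by force
  then have "mu (inv_into (Xs k) mu y) = y" by (rule f_inv_into_f)
  moreover have "inv_into (Xs k) mu y \<in> Xs k" using \<open>y \<in> mu ` Xs k\<close> by (rule inv_into_into)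
  ultimately show ?thesis unfolding muinv_def by simp
qed

lemma muinv2: "length x = k \<Longrightarrow> muinv (mu x) = x"
  unfolding muinv_def using mu_inj by (simp add: inv_into_f_f)

lemma Aff_len: "length x = k \<Longrightarrow> length (Aff x) = k"
  using mu_len wv by (simp add: Aff_def)

end

sublocale wrp \<subseteq> AF: bijX k Aff Ainv
proof
  fix x :: "int list" assume lx: "length x = k"
  show "length (Aff x) = k" by (rule Aff_len[OF lx])
  show "length (Ainv x) = k" using muinv lx wv by (simp add: Ainv_def)
  show "Aff (Ainv x) = x" using muinv lx wv by (simp add: Ainv_def Aff_def)
  show "Ainv (Aff x) = x" using muinv2 lx wv mu_len by (simp add: Ainv_def Aff_def)
qed

context wrp
begin

lemma Aff_inj: "length x = k \<Longrightarrow> length y = k \<Longrightarrow> Aff x = Aff y \<Longrightarrow> x = y"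
proof -
  assume lx: "length x = k" and ly: "length y = k" and e: "Aff x = Aff y"
  have "Ainv (Aff x) = Ainv (Aff y)" using e by simp
  then show "x = y" using AF.Ainv_A[OF lx] AF.Ainv_A[OF ly] by simp
qed

lemma vsub_Aff_eq: 
  assumes lx: "length x = k" and ly: "length y = k"
  shows "vsub (Aff x) (mu y) = wv \<longleftrightarrow> x = y"
proof
  assume e: "vsub (Aff x) (mu y) = wv"
  have "mu x = mu y"
  proof (rule list_eqI2)
    show "length (mu x) = length (mu y)" using lx ly mu_len by simp
    fix i assume "i < length (mu x)"
    then have i: "i < k" using lx mu_len by simp
    have "vsub (Aff x) (mu y) ! i = wv ! i" using e by simp
    then show "mu x ! i = mu y ! i" using i lx ly mu_len wv by (simp add: Aff_def)
  qed
  then show "x = y" using mu_inj lx ly by (auto simp: inj_on_def)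
next
  assume "x = y"
  have "vadd (mu y) wv = vadd wv (mu y)" by (rule vadd_comm)
  then show "vsub (Aff x) (mu y) = wv" using \<open>x = y\<close> ly mu_len wv by (simp add: Aff_def)
qed

lemma psi_aff:
  assumes fc: "(f, zk k) \<in> wr_carrier m k" and lx: "length x = k"
  shows "psi f (Aff x) mod p = (eps * f x) mod p"
proof -
  have fin: "finite {y. f y \<noteq> 0}" using fc by (simp add: in_wr_carrier)
  have lA: "length (Aff x) = k" using Aff_len[OF lx] .
  have other: "p dvd f y * u0 (vsub (Aff x) (mu y))" if y: "f y \<noteq> 0" "y \<noteq> x" for y
  proof -
    have ly: "length y = k" using supp_len[OF fc y(1)] .
    have "vsub (Aff x) (mu y) \<noteq> wv" using vsub_Aff_eq[OF lx ly] y(2) by simp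
    moreover have "length (vsub (Aff x) (mu y)) = k" using lA ly mu_len by simp
    ultimately show ?thesis using wv(2) by simp
  qed
  have L: "psi f (Aff x) mod p = (\<Sum>y\<in>{x. f x \<noteq> 0}. f y * u0 (vsub (Aff x) (mu y))) mod p"
    by (rule lincomb[OF fc lA])
  show ?thesis
  proof (cases "f x = 0")
    case True
    have "p dvd (\<Sum>y\<in>{x. f x \<noteq> 0}. f y * u0 (vsub (Aff x) (mu y)))"
      by (rule dvd_sum) (use other True in auto)
    then show ?thesis using L True by simp
  next
    case False
    have "(\<Sum>y\<in>{x. f x \<noteq> 0}. f y * u0 (vsub (Aff x) (mu y))) mod p = (f x * u0 (vsub (Aff x) (mu x))) mod p"
      by (rule sum_single_mod[OF fin]) (use other False in auto)
    moreover have "vsub (Aff x) (mu x) = wv" using vsub_Aff_eq[OF lx lx] by simp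
    ultimately show ?thesis using L by (simp add: eps_def mult.commute)
  qed
qed

lemma Lam_psi:
  assumes chi: "\<And>y. length y = k \<Longrightarrow> p dvd (\<chi> (Aff y) - s * \<chi> y)"
    and es: "p dvd (eps * s - 1)" and gc: "(g, zk k) \<in> wr_carrier m k"
  shows "p dvd (Lam \<chi> (psi g) - Lam \<chi> g)"
proof -
  define S where "S = {y. g y \<noteq> 0}"
  define S' where "S' = {y. psi g y \<noteq> 0}"
  have pgc: "(psi g, zk k) \<in> wr_carrier m k" by (rule psi_carrier[OF gc])
  have finS: "finite S" using gc by (simp add: S_def in_wr_carrier)
  have finS': "finite S'" using pgc by (simp add: S'_def in_wr_carrier)
  define T where "T = S' \<union> Aff ` S"
  have finT: "finite T" using finS finS' by (simp add: T_def)
  have e1: "Lam \<chi> (psi g) = (\<Sum>z\<in>T. \<chi> z * psi g z)"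
    by (rule Lam_superset[OF finT]) (auto simp: T_def S'_def)
  have sub: "Aff ` S \<subseteq> T" by (auto simp: T_def)
  have e2: "(\<Sum>z\<in>T. \<chi> z * psi g z) = (\<Sum>z\<in>T - Aff ` S. \<chi> z * psi g z) + (\<Sum>z\<in>Aff ` S. \<chi> z * psi g z)"
    by (rule sum.subset_diff[OF sub finT])
  have d1: "p dvd (\<Sum>z\<in>T - Aff ` S. \<chi> z * psi g z)"
  proof (rule dvd_sum)
    fix z assume z: "z \<in> T - Aff ` S"
    then have zS': "z \<in> S'" by (auto simp: T_def)
    then have lz: "length z = k" using supp_len[OF pgc] by (simp add: S'_def)
    define x where "x = Ainv z"
    have lx: "length x = k" using AF.Ainv_len[OF lz] by (simp add: x_def)
    have zx: "Aff x = z" using AF.A_Ainv[OF lz] by (simp add: x_def)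
    have "x \<notin> S" using z zx by auto
    then have "g x = 0" by (simp add: S_def)
    then have "psi g z mod p = 0" using psi_aff[OF gc lx] zx by simp
    then have "p dvd psi g z" by (simp add: dvd_eq_mod_eq_0)
    then show "p dvd \<chi> z * psi g z" by (rule dvd_mult)
  qed
  have injA: "inj_on Aff S" using Aff_inj supp_len[OF gc] by (auto simp: inj_on_def S_def)
  have e3: "(\<Sum>z\<in>Aff ` S. \<chi> z * psi g z) = (\<Sum>x\<in>S. \<chi> (Aff x) * psi g (Aff x))"
    by (simp add: sum.reindex[OF injA])
  have e4: "Lam \<chi> g = (\<Sum>x\<in>S. \<chi> x * g x)" by (simp add: Lam_def S_def)
  have d2: "p dvd ((\<Sum>x\<in>S. \<chi> (Aff x) * psi g (Aff x)) - (\<Sum>x\<in>S. \<chi> x * g x))"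
  proof (rule dvd_sum_diff[OF finS])
    fix x assume "x \<in> S"
    then have lx: "length x = k" using supp_len[OF gc] by (simp add: S_def)
    have "p dvd (psi g (Aff x) - eps * g x)"
      using psi_aff[OF gc lx] by (simp add: mod_eq_dvd_iff)
    then show "p dvd (\<chi> (Aff x) * psi g (Aff x) - \<chi> x * g x)"
      using dvd_prod_helper[OF chi[OF lx] _ es] by blast
  qed
  have "Lam \<chi> (psi g) - Lam \<chi> g = (\<Sum>z\<in>T - Aff ` S. \<chi> z * psi g z) +
      ((\<Sum>x\<in>S. \<chi> (Aff x) * psi g (Aff x)) - (\<Sum>x\<in>S. \<chi> x * g x))"
    using e1 e2 e3 e4 by simp
  then show ?thesis using d1 d2 by simp
qed

lemma twisted_B:
  assumes nofix: "\<And>v. length v = k \<Longrightarrow> mu v = v \<Longrightarrow> v = zk k"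
    and f1: "(f1, zk k) \<in> wr_carrier m k" and f2: "(f2, zk k) \<in> wr_carrier m k"
    and tc: "twisted_conj W \<phi> (f1, zk k) (f2, zk k)"
    and chi: "\<And>y. length y = k \<Longrightarrow> p dvd (\<chi> (Aff y) - s * \<chi> y)"
    and es: "p dvd (eps * s - 1)"
  shows "p dvd (Lam \<chi> f1 - Lam \<chi> f2)"
proof -
  obtain v h where v: "length v = k" "snd (f1, zk k) = vadd (vadd v (snd (f2, zk k))) (vneg (mu v))"
    and h: "h \<in> wr_carrier m k" "snd h = v"
      "(f1, zk k) = wr_mult m k (wr_mult m k h (f2, zk k)) (\<phi> (wr_inv m k h))"
    using twisted_snd[OF f1 f2 tc] by blast
  have lmv: "length (mu v) = k" using mu_len v(1) by simp
  have "mu v = v"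
  proof (rule list_eqI2)
    show "length (mu v) = length v" using lmv v by simp
    fix i assume "i < length (mu v)"
    then have i: "i < k" using lmv by simp
    have "zk k ! i = vadd (vadd v (zk k)) (vneg (mu v)) ! i" using v(2) by simp
    then show "mu v ! i = v ! i" using i v(1) lmv by simp
  qed
  then have v0: "v = zk k" using nofix v(1) by simp
  obtain g where hg: "h = (g, zk k)" using h(2) v0 by (cases h) auto
  have gc: "(g, zk k) \<in> wr_carrier m k" using h(1) hg by simp
  define gn where "gn = (\<lambda>x. if length x = k then (- g x) mod int m else 0)"
  have wi: "wr_inv m k h = (gn, zk k)" using hg wr_inv_B by (simp add: gn_def)
  have gnc: "(gn, zk k) \<in> wr_carrier m k" using wr_inv_closed[OF m_pos gc] wi hg by simp
  have pg: "\<phi> (gn, zk k) = (psi gn, zk k)" by (rule phi_B[OF gnc])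
  have "(f1, zk k) = (badd m k (badd m k g f2) (psi gn), zk k)"
    using h(3) hg wi pg by (simp add: B_mult)
  then have f1e: "f1 = badd m k (badd m k g f2) (psi gn)" by simp
  have bc: "(badd m k g f2, zk k) \<in> wr_carrier m k" by (rule badd_carrier[OF m_pos gc f2])
  have d1: "p dvd (Lam \<chi> f1 - (Lam \<chi> (badd m k g f2) + Lam \<chi> (psi gn)))"
    unfolding f1e by (rule Lam_badd[OF bc psi_carrier[OF gnc]])
  have d2: "p dvd (Lam \<chi> (badd m k g f2) - (Lam \<chi> g + Lam \<chi> f2))" by (rule Lam_badd[OF gc f2])
  have d3: "p dvd (Lam \<chi> (psi gn) - Lam \<chi> gn)" by (rule Lam_psi[where \<chi> = \<chi> and s = s, OF chi es gnc])
  have d4: "p dvd (Lam \<chi> gn + Lam \<chi> g)" unfolding gn_def by (rule Lam_neg[OF gc])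
  have "Lam \<chi> f1 - Lam \<chi> f2 = (Lam \<chi> f1 - (Lam \<chi> (badd m k g f2) + Lam \<chi> (psi gn)))
     + (Lam \<chi> (badd m k g f2) - (Lam \<chi> g + Lam \<chi> f2)) + (Lam \<chi> (psi gn) - Lam \<chi> gn)
     + (Lam \<chi> gn + Lam \<chi> g)" by simp
  moreover have "p dvd (Lam \<chi> f1 - (Lam \<chi> (badd m k g f2) + Lam \<chi> (psi gn)))
     + (Lam \<chi> (badd m k g f2) - (Lam \<chi> g + Lam \<chi> f2)) + (Lam \<chi> (psi gn) - Lam \<chi> gn)
     + (Lam \<chi> gn + Lam \<chi> g)" by (rule dvd_add[OF dvd_add[OF dvd_add[OF d1 d2] d3] d4])
  ultimately show ?thesis by simp
qed

end


lemma funpow_fix: "f y = y \<Longrightarrow> (f ^^ n) y = y"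
  by (induction n) auto

context wraut
begin

lemma mu_pow_len: "length v = k \<Longrightarrow> length ((mu ^^ n) v) = k"
  by (induction n) (auto simp: mu_len)

lemma mu_pow_add: "length v = k \<Longrightarrow> length w = k \<Longrightarrow> (mu ^^ n) (vadd v w) = vadd ((mu ^^ n) v) ((mu ^^ n) w)"
  by (induction n) (auto simp: mu_add mu_pow_len)

lemma mu_pow_addmap: "addmap k (mu ^^ n)"
  by unfold_locales (auto simp: mu_pow_len mu_pow_add)

lemma muinv_addmap:
  fixes mi assumes mi: "\<And>y. length y = k \<Longrightarrow> length (mi y) = k \<and> mu (mi y) = y"
  shows "addmap k mi"
proof
  fix v w :: "int list" assume lv: "length v = k" and lw: "length w = k"
  show "length (mi v) = k" using mi lv by simp
  have "mu (vadd (mi v) (mi w)) = vadd v w" using mi lv lw mu_add by simp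
  moreover have "mu (mi (vadd v w)) = vadd v w" using mi lv lw by simp
  moreover have "length (vadd (mi v) (mi w)) = k" "length (mi (vadd v w)) = k" using mi lv lw by auto
  ultimately show "mi (vadd v w) = vadd (mi v) (mi w)" using mu_inj by (auto simp: inj_on_def)
qed

end

context wrp
begin

lemma content_mu: "length y = k \<Longrightarrow> vcontent (mu y) = vcontent y"
proof -
  assume ly: "length y = k"
  interpret MI: addmap k muinv by (rule muinv_addmap[OF muinv])
  have d1: "vcontent y dvd vcontent (mu y)" by (rule MU.vcontent_dvd_image[OF ly])
  have "vcontent (mu y) dvd vcontent (muinv (mu y))" by (rule MI.vcontent_dvd_image) (use ly mu_len in simp)
  then have d2: "vcontent (mu y) dvd vcontent y" using muinv2[OF ly] by simp
  show ?thesis using d1 d2 vcontent_nonneg by (simp add: zdvd_antisym_nonneg)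
qed

definition Lx where "Lx x = vsub (vsub x (mu x)) wv"

lemma Lx_len: "length x = k \<Longrightarrow> length (Lx x) = k"
  using mu_len wv by (simp add: Lx_def)

lemma Lx_Aff: "length x = k \<Longrightarrow> Lx (Aff x) = mu (Lx x)"
proof -
  assume lx: "length x = k"
  have lmx: "length (mu x) = k" using mu_len lx by simp
  have lmmx: "length (mu (mu x)) = k" using mu_len lmx by simp
  have lmw: "length (mu wv) = k" using mu_len wv by simp
  have "mu (Aff x) = vadd (mu (mu x)) (mu wv)" using mu_add lmx wv by (simp add: Aff_def)
  moreover have "mu (Lx x) = vsub (vsub (mu x) (mu (mu x))) (mu wv)"
    using mu_vsub lx lmx wv by (simp add: Lx_def)
  ultimately show ?thesis using lx lmx lmmx lmw wv
    by (intro list_eqI2) (auto simp: Lx_def Aff_def)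
qed

lemma Lx_Aff_pow: "length x = k \<Longrightarrow> Lx ((Aff ^^ n) x) = (mu ^^ n) (Lx x)"
proof (induction n)
  case 0 then show ?case by simp
next
  case (Suc n)
  have "length ((Aff ^^ n) x) = k" using AF.Apow_len Suc.prems by simp
  then show ?case using Suc Lx_Aff by simp
qed

lemma mu_pow_smul: "length y = k \<Longrightarrow> (mu ^^ n) (smul c y) = smul c ((mu ^^ n) y)"
proof -
  assume ly: "length y = k"
  interpret M: addmap k "mu ^^ n" by (rule mu_pow_addmap)
  show ?thesis by (rule M.am_smul[OF ly])
qed

lemma smul_cancel: "c \<noteq> 0 \<Longrightarrow> length a = length b \<Longrightarrow> smul c a = smul c b \<Longrightarrow> a = b"
proof -
  assume c: "c \<noteq> 0" and l: "length a = length b" and e: "smul c a = smul c b"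
  show "a = b"
  proof (rule list_eqI2[OF l])
    fix i assume i: "i < length a"
    have "smul c a ! i = smul c b ! i" using e by simp
    then show "a ! i = b ! i" using i l c by simp
  qed
qed

end


context wrp
begin

abbreviation "DD \<equiv> det MU.Dm"

lemma sign_choice:
  assumes pc: "p = 2 \<or> (p = 3 \<and> odd k)"
  shows "\<exists>sg. (sg = 1 \<or> (sg = -1 \<and> p = 3 \<and> odd k)) \<and> p dvd (eps * sg - 1)"
proof (cases "p dvd (eps - 1)")
  case True
  then show ?thesis by (intro exI[of _ 1]) simp
next
  case False
  have ne: "\<not> p dvd eps" by (rule eps_ndvd)
  show ?thesis
  proof (cases "p = 2")
    case True
    then have "2 dvd (eps - 1)" using ne by presburger
    then show ?thesis using False True by simp
  next
    case p2: False
    then have p3: "p = 3" "odd k" using pc by auto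
    then have "3 dvd (eps * (-1) - 1)" using ne False by presburger
    then show ?thesis using p3 by (intro exI[of _ "-1"]) simp
  qed
qed

definition ya where "ya a = vsub (smul DD a) wv"

lemma ya_len: "length a = k \<Longrightarrow> length (ya a) = k" using wv by (simp add: ya_def)

lemma y0_exists_pos:
  assumes D: "DD \<noteq> 0" and k0: "k > 0"
  shows "\<exists>a. length a = k \<and> ya a \<noteq> zk k"
proof (cases "wv = zk k")
  case False
  have "ya (zk k) \<noteq> zk k"
  proof
    assume e: "ya (zk k) = zk k"
    have "wv = zk k"
    proof (rule list_eqI2)
      show "length wv = length (zk k)" using wv by simp
      fix i assume i: "i < length wv"
      have "ya (zk k) ! i = zk k ! i" using e by simp
      then show "wv ! i = zk k ! i" using i wv by (simp add: ya_def)
    qed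
    then show False using False by simp
  qed
  then show ?thesis by (intro exI[of _ "zk k"]) simp
next
  case True
  have "ya (ev k 0) ! 0 = DD" using True k0 by (simp add: ya_def nth_ev)
  then have "ya (ev k 0) \<noteq> zk k" using D k0 by auto
  then show ?thesis by (intro exI[of _ "ev k 0"]) simp
qed

lemma y0_exists_neg:
  assumes D: "DD \<noteq> 0" and ok: "odd k"
  shows "\<exists>a. length a = k \<and> (\<forall>N. odd N \<longrightarrow> (mu ^^ N) (ya a) \<noteq> ya a)"
proof (rule ccontr)
  assume "\<not> ?thesis"
  then have H: "\<forall>a. \<exists>N. length a = k \<longrightarrow> odd N \<and> (mu ^^ N) (ya a) = ya a" by blast
  obtain Nf where Nf: "\<And>a. length a = k \<Longrightarrow> odd (Nf a) \<and> (mu ^^ Nf a) (ya a) = ya a"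
    using choice[OF H] by blast
  define N where "N = Nf (zk k) * (\<Prod>i<k. Nf (ev k i))"
  have oN: "odd N" unfolding N_def using Nf by (simp add: even_prod_iff)
  have fixN: "(mu ^^ N) (ya a) = ya a" if a: "a = zk k \<or> (\<exists>i<k. a = ev k i)" for a
  proof -
    have la: "length a = k" using a by auto
    have "Nf a dvd N"
    proof (cases "a = zk k")
      case True then show ?thesis by (simp add: N_def)
    next
      case False
      then obtain i where i: "i < k" "a = ev k i" using a by auto
      then have "Nf a dvd (\<Prod>i<k. Nf (ev k i))" using dvd_prodI[of "{..<k}" i "\<lambda>i. Nf (ev k i)"] by simp
      then show ?thesis by (simp add: N_def)
    qed
    then obtain c where c: "N = Nf a * c" by (auto simp: dvd_def)
    have "(mu ^^ N) (ya a) = ((mu ^^ Nf a) ^^ c) (ya a)" by (simp add: c funpow_mult)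
    also have "\<dots> = ya a" by (rule funpow_fix) (use Nf[OF la] in simp)
    finally show ?thesis .
  qed
  interpret M: addmap k "mu ^^ N" by (rule mu_pow_addmap)
  have Me: "(mu ^^ N) (ev k i) = ev k i" if i: "i < k" for i
  proof -
    have e: "vsub (ya (ev k i)) (ya (zk k)) = smul DD (ev k i)"
      using wv by (intro list_eqI2) (auto simp: ya_def)
    have "(mu ^^ N) (smul DD (ev k i)) = smul DD (ev k i)"
    proof -
      have f1: "(mu ^^ N) (ya (ev k i)) = ya (ev k i)" using fixN i by blast
      have f2: "(mu ^^ N) (ya (zk k)) = ya (zk k)" using fixN by blast
      show ?thesis using M.am_vsub[OF ya_len ya_len, of "ev k i" "zk k"] f1 f2 e by simp
    qed
    then have "smul DD ((mu ^^ N) (ev k i)) = smul DD (ev k i)" using M.am_smul[of "ev k i"] by simp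
    then show ?thesis using smul_cancel[OF D] M.am_len[of "ev k i"] by simp
  qed
  have Mid: "M.matL = 1\<^sub>m k"
    by (rule eq_matI) (auto simp: M.matL_def Me nth_ev)
  have "\<forall>v. length v = k \<longrightarrow> (mu ^^ N) v = v"
  proof (intro allI impI)
    fix v :: "int list" assume lv: "length v = k"
    have "vec_of_list ((mu ^^ N) v) = vec_of_list v"
      using M.matL_vec[OF lv] Mid M.vec_carrier[OF lv] by simp
    then show "(mu ^^ N) v = v" by (metis list_vec)
  qed
  then show False using MU.LA3[OF ok D oN] by simp
qed

end


lemma Lam_delta: "Lam \<chi> (delta x) = \<chi> x"
proof -
  have "{y. delta x y \<noteq> 0} = {x}" by (auto simp: delta_def)
  then show ?thesis by (simp add: Lam_def delta_def)
qed

context wrp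
begin

lemma caseD1:
  assumes D: "DD \<noteq> 0" and k0: "k > 0" and pc: "p = 2 \<or> (p = 3 \<and> odd k)"
  shows "infinite (reidemeister_classes W \<phi>)"
proof -
  obtain sg where sg: "sg = 1 \<or> (sg = -1 \<and> p = 3 \<and> odd k)" and es: "p dvd (eps * sg - 1)"
    using sign_choice[OF pc] by blast
  obtain a where a: "length a = k" "ya a \<noteq> zk k"
    "sg = -1 \<longrightarrow> (\<forall>N. odd N \<longrightarrow> (mu ^^ N) (ya a) \<noteq> ya a)"
  proof (cases "sg = 1")
    case True
    then show ?thesis using y0_exists_pos[OF D k0] that by auto
  next
    case False
    then have sg1: "sg = -1" "odd k" using sg by auto
    obtain a where a: "length a = k" "\<forall>N. odd N \<longrightarrow> (mu ^^ N) (ya a) \<noteq> ya a"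
      using y0_exists_neg[OF D sg1(2)] by blast
    have "ya a \<noteq> zk k"
    proof
      assume "ya a = zk k"
      then have "(mu ^^ 1) (ya a) = ya a" using mu_zero by simp
      moreover have "odd (1::nat)" by simp
      ultimately show False using a(2) by blast
    qed
    then show ?thesis using a that by auto
  qed
  define y0 where "y0 = ya a"
  have ly0: "length y0 = k" using ya_len[OF a(1)] by (simp add: y0_def)
  define c where "c t = 1 + DD * DD * int t" for t :: nat
  have cpos: "c t > 0" for t
  proof -
    have "DD * DD \<ge> 0" by simp
    then have h: "DD * DD * int t \<ge> 0" by simp
    show ?thesis unfolding c_def using h by linarith
  qed
  have xex: "\<exists>x. length x = k \<and> Lx x = smul (c t) y0" for t
  proof -
    define yy where "yy = vadd a (smul (DD * int t) y0)"
    have lyy: "length yy = k" using a(1) ly0 by (simp add: yy_def)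
    obtain x where x: "length x = k" "vsub x (mu x) = smul DD yy" using MU.LA2b[OF lyy] by blast
    have "Lx x = smul (c t) y0"
      using x a(1) ly0 wv lyy
      by (intro list_eqI2) (auto simp: Lx_def yy_def c_def y0_def ya_def algebra_simps)
    then show ?thesis using x(1) by blast
  qed
  obtain xs where xs: "\<And>t. length (xs t) = k \<and> Lx (xs t) = smul (c t) y0"
    using choice[of "\<lambda>t x. length x = k \<and> Lx x = smul (c t) y0"] xex by blast
  have vc0: "vcontent y0 > 0"
  proof -
    have "vcontent y0 \<noteq> 0"
    proof
      assume "vcontent y0 = 0"
      then have "y0 = zk k" using ly0 vcontent_zero_iff by (intro list_eqI2) auto
      then show False using a(2) by (simp add: y0_def)
    qed
    then show ?thesis using vcontent_nonneg[of y0] by simp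
  qed
  define gam where "gam x = vcontent (Lx x)" for x
  have gamA: "gam (Aff x) = gam x" if "length x = k" for x
    using that Lx_Aff content_mu Lx_len by (simp add: gam_def)
  have gam_apow: "gam (AF.apow j x) = gam x" if "length x = k" for x j
    by (rule AF.invariant_apow[where \<gamma> = gam, OF gamA that])
  have distinct: "t1 = t2" if e: "AF.apow j (xs t1) = xs t2" for t1 t2 j
  proof -
    have "gam (xs t2) = gam (xs t1)" using gam_apow[of "xs t1" j] xs e by simp
    then have "\<bar>c t2\<bar> * vcontent y0 = \<bar>c t1\<bar> * vcontent y0"
      using xs by (simp add: gam_def vcontent_smul)
    then have "c t2 = c t1" using vc0 cpos[of t1] cpos[of t2] by simp
    then have "DD * DD * int t2 = DD * DD * int t1" by (simp add: c_def)
    then show ?thesis using D by simp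
  qed
  have noodd: "even j" if sgm: "sg = -1" and e: "AF.apow j (xs t) = xs t" for j t
  proof (rule ccontr)
    assume oj: "odd j"
    define n where "n = nat \<bar>j\<bar>"
    have on: "odd n" using oj by (simp add: n_def even_nat_iff)
    have "(Aff ^^ n) (xs t) = xs t" using AF.apow_periodic[OF _ e] xs by (simp add: n_def)
    then have "(mu ^^ n) (Lx (xs t)) = Lx (xs t)" using Lx_Aff_pow xs by metis
    then have "(mu ^^ n) (smul (c t) y0) = smul (c t) y0" using xs by simp
    then have "smul (c t) ((mu ^^ n) y0) = smul (c t) y0" using mu_pow_smul[OF ly0] by simp
    then have "(mu ^^ n) y0 = y0" using smul_cancel[of "c t"] cpos[of t] mu_pow_len[OF ly0] ly0 by auto
    then show False using a(3) sgm on by (simp add: y0_def)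
  qed
  define orb where "orb t y = (\<exists>j. AF.apow j (xs t) = y)" for t y
  define chi where "chi t y = (if orb t y then (if sg = 1 then 1 else
      (if even (SOME j. AF.apow j (xs t) = y) then 1 else -1)) else (0::int))" for t y
  have parity: "even i = even j" if sgm: "sg = -1" and e: "AF.apow i (xs t) = AF.apow j (xs t)" for i j t
  proof -
    have "AF.apow (i - j) (xs t) = xs t" using AF.apow_inv_eq[OF _ e] xs by simp
    then have "even (i - j)" using noodd[OF sgm] by blast
    then show ?thesis by simp
  qed
  have C1: "chi t (xs t) = 1" for t
  proof -
    have o: "orb t (xs t)" unfolding orb_def by (intro exI[of _ 0]) simp
    show ?thesis
    proof (cases "sg = 1")
      case True then show ?thesis using o by (simp add: chi_def)
    next
      case False
      then have sgm: "sg = -1" using sg by auto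
      have "AF.apow (SOME j. AF.apow j (xs t) = xs t) (xs t) = xs t"
        by (rule someI[of _ 0]) simp
      then have "even (SOME j. AF.apow j (xs t) = xs t)" using noodd[OF sgm] by blast
      then show ?thesis using o False by (simp add: chi_def)
    qed
  qed
  have C2: "chi t1 (xs t2) = 0" if "t1 \<noteq> t2" for t1 t2
  proof -
    have "\<not> orb t1 (xs t2)" using distinct that by (auto simp: orb_def)
    then show ?thesis by (simp add: chi_def)
  qed
  have C3: "p dvd (chi t (Aff y) - sg * chi t y)" if ly: "length y = k" for t y
  proof (cases "orb t y")
    case True
    then obtain j where j: "AF.apow j (xs t) = y" by (auto simp: orb_def)
    have j1: "AF.apow (j + 1) (xs t) = Aff y" using AF.apow_succ xs j by metis
    then have oA: "orb t (Aff y)" by (auto simp: orb_def)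
    show ?thesis
    proof (cases "sg = 1")
      case True then show ?thesis using oA \<open>orb t y\<close> by (simp add: chi_def)
    next
      case False
      then have sgm: "sg = -1" using sg by auto
      define j1' where "j1' = (SOME i. AF.apow i (xs t) = y)"
      define j2' where "j2' = (SOME i. AF.apow i (xs t) = Aff y)"
      have e1: "AF.apow j1' (xs t) = y" unfolding j1'_def by (rule someI[of _ j]) (rule j)
      have e2: "AF.apow j2' (xs t) = Aff y" unfolding j2'_def by (rule someI[of _ "j + 1"]) (rule j1)
      have "even j1' = even j" using parity[OF sgm] e1 j by metis
      moreover have "even j2' = even (j + 1)" using parity[OF sgm] e2 j1 by metis
      ultimately have "even j2' \<longleftrightarrow> \<not> even j1'" by simp
      then have "chi t (Aff y) = - chi t y"
        using oA \<open>orb t y\<close> False by (simp add: chi_def j1'_def[symmetric] j2'_def[symmetric])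
      then show ?thesis using sgm by simp
    qed
  next
    case False
    have "\<not> orb t (Aff y)"
    proof
      assume "orb t (Aff y)"
      then obtain j where j: "AF.apow j (xs t) = Aff y" by (auto simp: orb_def)
      have "AF.apow (j - 1) (xs t) = Ainv (Aff y)" using AF.apow_pred xs j by metis
      then have "AF.apow (j - 1) (xs t) = y" using AF.Ainv_A[OF ly] by simp
      then show False using False by (auto simp: orb_def)
    qed
    then show ?thesis using False by (simp add: chi_def)
  qed
  have nofix: "\<And>v. length v = k \<Longrightarrow> mu v = v \<Longrightarrow> v = zk k" using MU.LA2a[OF D] by blast
  define b where "b t = (delta (xs t), zk k)" for t
  have bc: "b t \<in> carrier W" for t using delta_carrier xs by (simp add: b_def)
  show ?thesis
  proof (rule inf_classes[OF grp phi_hom bc])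
    fix t1 t2 :: nat assume ne: "t1 \<noteq> t2"
    show "\<not> twisted_conj W \<phi> (b t1) (b t2)"
    proof
      assume tc: "twisted_conj W \<phi> (b t1) (b t2)"
      have c1: "(delta (xs t1), zk k) \<in> wr_carrier m k" using bc[of t1] by (simp add: b_def)
      have c2: "(delta (xs t2), zk k) \<in> wr_carrier m k" using bc[of t2] by (simp add: b_def)
      have tc': "twisted_conj W \<phi> (delta (xs t1), zk k) (delta (xs t2), zk k)" using tc by (simp add: b_def)
      have C3': "\<And>y. length y = k \<Longrightarrow> p dvd (chi t1 (Aff y) - sg * chi t1 y)" using C3 by blast
      have "p dvd (Lam (chi t1) (delta (xs t1)) - Lam (chi t1) (delta (xs t2)))"
        by (rule twisted_B[where \<chi> = "chi t1" and s = sg, OF nofix c1 c2 tc' C3' es])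
      then have "p dvd 1" using C1 C2[OF ne] by (simp add: Lam_delta)
      then show False using p_prime by (simp add: prime_int_iff)
    qed
  qed
qed

end

theorem R_inf_general:
  fixes m k :: nat and p :: int
  assumes m: "m > 0" and k0: "k > 0" and p: "prime p" and pm: "p dvd int m"
    and pc: "p = 2 \<or> (p = 3 \<and> odd k)"
  shows "R_infinity (wreath m k)"
  unfolding R_infinity_def
proof
  fix \<phi> assume phi: "\<phi> \<in> iso (wreath m k) (wreath m k)"
  interpret wrp m k \<phi> p by unfold_locales (use m phi p pm in auto)
  show "infinite (reidemeister_classes (wreath m k) \<phi>)"
  proof (cases "DD = 0")
    case True then show ?thesis by (rule caseD0)
  next
    case False then show ?thesis by (rule caseD1[OF _ k0 pc])
  qed
qed


theorem corollary3p3: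
  fixes n k :: nat
  assumes "n > 0" and "k > 0"
  shows "R_infinity (wreath (2 * n) k) \<and> R_infinity (wreath (3 * n) (2 * k + 1))"
proof
  show "R_infinity (wreath (2 * n) k)"
    by (rule R_inf_general[of "2 * n" k 2]) (use assms in auto)
  show "R_infinity (wreath (3 * n) (2 * k + 1))"
    by (rule R_inf_general[of "3 * n" "2 * k + 1" 3]) (use assms in auto)
qed

end
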